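(* Let $\mathcal{R}^{rsc}$ be a rich single-crossing domain and $F:\mathcal{R}^{rsc}\to\mathbb{Z}$ strategy-proof. Then the indirect preference correspondence $V^F$ is continuous: for every $R\in\mathcal{R}^{rsc}$ and every monotone sequence $\{R^n\}$ in $\mathcal{R}^{rsc}$ converging to $R$ in the order topology, the sequence $\{F(R^n)\}$ converges in $\mathbb{Z}$ and $\lim_n F(R^n)\;I\;F(R)$, where $I$ is the indifference relation of $R$. The same holds for mechanisms defined on a closed interval $[\underline R,\overline R]\subseteq\mathcal{R}^{rsc}$.
   Context: $\mathbb{Z}=[0,\infty)\times[0,1]$ with the Euclidean topology; $(t',q')<(t'',q'')$ means $t'<t''$, $q'<q''$; $x\le y$ means $x=y$ or $x<y$; $\square(z)=\{x:x\le z\}$. A classical preference is a complete transitive relation $R$ on $\mathbb{Z}$ (strict part $P$, indifference $I$) strictly decreasing in $t$ for fixed $q$, strictly increasing in $q$ for fixed $t$, with closed upper and lower contour sets. Distinct classical preferences satisfy single-crossing if any indifference set of one meets any indifference set of the other in at most one point. A rich single-crossing domain $\mathcal{R}^{rsc}$ is a set of pairwise single-crossing classical preferences such that for all $x'<x''$ some member is indifferent between them. For distinct members, $R'\prec R''$ means $\square(z)\cap\{x:xR''z\}\subseteq\square(z)\cap\{x:xR'z\}$ for all $z$; $\prec$ is a linear order and $\mathcal{R}^{rsc}$ has its order topology. A sequence is monotone if $R^n\precsim R^{n+1}$ for all $n$ or $R^{n+1}\precsim R^n$ for all $n$ ($\precsim$ means $\prec$ or $=$). A mechanism $F$ maps the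 domain to $\mathbb{Z}$ and is strategy-proof if $F(R')R'F(R'')$ for all $R',R''$. Its indirect preference correspondence is $V^F(R)=\{z\in\mathbb{Z}: z\,I\,F(R)\}$. *)

theory Defs
  imports "HOL-Analysis.Analysis"
begin

type_synonym alloc = "real \<times> real"
type_synonym pref = "alloc \<Rightarrow> alloc \<Rightarrow> bool"

definition Zset :: "alloc set" where
  "Zset = {(t, q). 0 \<le> t \<and> 0 \<le> q \<and> q \<le> 1}"

definition zless :: "alloc \<Rightarrow> alloc \<Rightarrow> bool" where
  "zless x y \<longleftrightarrow> fst x < fst y \<and> snd x < snd y"

definition zle :: "alloc \<Rightarrow> alloc \<Rightarrow> bool" where
  "zle x y \<longleftrightarrow> x = y \<or> zless x y"

definition box :: "alloc \<Rightarrow> alloc set" where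
  "box z = {x \<in> Zset. zle x z}"

definition strict :: "pref \<Rightarrow> alloc \<Rightarrow> alloc \<Rightarrow> bool" where
  "strict R x y \<longleftrightarrow> R x y \<and> \<not> R y x"

definition indiff :: "pref \<Rightarrow> alloc \<Rightarrow> alloc \<Rightarrow> bool" where
  "indiff R x y \<longleftrightarrow> R x y \<and> R y x"

definition classical :: "pref \<Rightarrow> bool" where
  "classical R \<longleftrightarrow>
     (\<forall>x y. R x y \<longrightarrow> x \<in> Zset \<and> y \<in> Zset) \<and>
     (\<forall>x\<in>Zset. \<forall>y\<in>Zset. R x y \<or> R y x) \<and>
     (\<forall>x\<in>Zset. \<forall>y\<in>Zset. \<forall>w\<in>Zset. R x y \<longrightarrow> R y w \<longrightarrow> R x w) \<and>
     (\<forall>t1 t2 q. (t1, q) \<in> Zset \<longrightarrow> (t2, q) \<in> Zset \<longrightarrow> t1 < t2 \<longrightarrow> strict R (t1, q) (t2, q)) \<and>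
     (\<forall>t q1 q2. (t, q1) \<in> Zset \<longrightarrow> (t, q2) \<in> Zset \<longrightarrow> q1 < q2 \<longrightarrow> strict R (t, q2) (t, q1)) \<and>
     (\<forall>z\<in>Zset. closedin (top_of_set Zset) {x \<in> Zset. R x z} \<and>
                closedin (top_of_set Zset) {x \<in> Zset. R z x})"

definition indiff_set :: "pref \<Rightarrow> alloc \<Rightarrow> alloc set" where
  "indiff_set R z = {x \<in> Zset. indiff R x z}"

definition single_crossing :: "pref \<Rightarrow> pref \<Rightarrow> bool" where
  "single_crossing R1 R2 \<longleftrightarrow>
     (\<forall>z1\<in>Zset. \<forall>z2\<in>Zset. \<forall>x y. x \<in> indiff_set R1 z1 \<inter> indiff_set R2 z2 \<longrightarrow>
                                 y \<in> indiff_set R1 z1 \<inter> indiff_set R2 z2 \<longrightarrow> x = y)"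

definition rich_single_crossing :: "pref set \<Rightarrow> bool" where
  "rich_single_crossing D \<longleftrightarrow>
     (\<forall>R\<in>D. classical R) \<and>
     (\<forall>R1\<in>D. \<forall>R2\<in>D. R1 \<noteq> R2 \<longrightarrow> single_crossing R1 R2) \<and>
     (\<forall>x1\<in>Zset. \<forall>x2\<in>Zset. zless x1 x2 \<longrightarrow> (\<exists>R\<in>D. indiff R x1 x2))"

definition prec :: "pref \<Rightarrow> pref \<Rightarrow> bool" where
  "prec R1 R2 \<longleftrightarrow> R1 \<noteq> R2 \<and>
     (\<forall>z\<in>Zset. box z \<inter> {x. R2 x z} \<subseteq> box z \<inter> {x. R1 x z})"

definition preceq :: "pref \<Rightarrow> pref \<Rightarrow> bool" where
  "preceq R1 R2 \<longleftrightarrow> prec R1 R2 \<or> R1 = R2"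

definition order_top :: "pref set \<Rightarrow> pref topology" where
  "order_top D = subtopology
     (topology_generated_by ({{R \<in> D. prec R a} | a. a \<in> D} \<union> {{R \<in> D. prec a R} | a. a \<in> D})) D"

definition monotone_seq :: "(nat \<Rightarrow> pref) \<Rightarrow> bool" where
  "monotone_seq Rs \<longleftrightarrow> (\<forall>n. preceq (Rs n) (Rs (Suc n))) \<or> (\<forall>n. preceq (Rs (Suc n)) (Rs n))"

definition strategy_proof :: "pref set \<Rightarrow> (pref \<Rightarrow> alloc) \<Rightarrow> bool" where
  "strategy_proof D F \<longleftrightarrow> (\<forall>R1\<in>D. \<forall>R2\<in>D. R1 (F R1) (F R2))"

definition mechanism :: "pref set \<Rightarrow> (pref \<Rightarrow> alloc) \<Rightarrow> bool" where
  "mechanism D F \<longleftrightarrow> (\<forall>R\<in>D. F R \<in> Zset)"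

definition indirect_pref :: "(pref \<Rightarrow> alloc) \<Rightarrow> pref \<Rightarrow> alloc set" where
  "indirect_pref F R = {z \<in> Zset. indiff R z (F R)}"

definition V_continuous :: "pref set \<Rightarrow> pref set \<Rightarrow> (pref \<Rightarrow> alloc) \<Rightarrow> bool" where
  "V_continuous D E F \<longleftrightarrow>
     (\<forall>R\<in>E. \<forall>Rs. (\<forall>n. Rs n \<in> E) \<longrightarrow> monotone_seq Rs \<longrightarrow>
        limitin (subtopology (order_top D) E) Rs R sequentially \<longrightarrow>
        (\<exists>L. ((\<lambda>n. F (Rs n)) \<longlongrightarrow> L) sequentially \<and> L \<in> indirect_pref F R))"

definition interval :: "pref set \<Rightarrow> pref \<Rightarrow> pref \<Rightarrow> pref set" where
  "interval D Rlo Rhi = {R \<in> D. preceq Rlo R \<and> preceq R Rhi}"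

end

theory Submission
  imports Defs
begin

lemma Zset_mem: "(t,q) \<in> Zset \<longleftrightarrow> 0 \<le> t \<and> 0 \<le> q \<and> q \<le> 1"
  by (simp add: Zset_def)

lemma Zset_eq: "Zset = {0..} \<times> {0..1::real}"
  by (auto simp: Zset_def)

lemma closed_Zset: "closed Zset"
  unfolding Zset_eq by (intro closed_Times closed_atLeast closed_atLeastAtMost)

lemma convex_Zset: "convex Zset"
  unfolding Zset_eq by (intro convex_Times convex_real_interval)

lemma cl_Z0: assumes "classical R" shows "\<forall>x y. R x y \<longrightarrow> x \<in> Zset \<and> y \<in> Zset"
  using assms unfolding classical_def by (elim conjE) assumption

lemma cl_total0: assumes "classical R" shows "\<forall>x\<in>Zset. \<forall>y\<in>Zset. R x y \<or> R y x"
  using assms unfolding classical_def by (elim conjE) assumption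

lemma cl_trans0: assumes "classical R" shows "\<forall>x\<in>Zset. \<forall>y\<in>Zset. \<forall>w\<in>Zset. R x y \<longrightarrow> R y w \<longrightarrow> R x w"
  using assms unfolding classical_def by (elim conjE) assumption

lemma cl_t0: assumes "classical R" shows "\<forall>t1 t2 q. (t1, q) \<in> Zset \<longrightarrow> (t2, q) \<in> Zset \<longrightarrow> t1 < t2 \<longrightarrow> strict R (t1, q) (t2, q)"
  using assms unfolding classical_def by (elim conjE) assumption

lemma cl_q0: assumes "classical R" shows "\<forall>t q1 q2. (t, q1) \<in> Zset \<longrightarrow> (t, q2) \<in> Zset \<longrightarrow> q1 < q2 \<longrightarrow> strict R (t, q2) (t, q1)"
  using assms unfolding classical_def by (elim conjE) assumption

lemma cl_c0: assumes "classical R" shows "\<forall>z\<in>Zset. closedin (top_of_set Zset) {x \<in> Zset. R x z} \<and> closedin (top_of_set Zset) {x \<in> Zset. R z x}"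
  using assms unfolding classical_def by (elim conjE) assumption

lemma cl_Z: "classical R \<Longrightarrow> R x y \<Longrightarrow> x \<in> Zset \<and> y \<in> Zset"
  using cl_Z0 by blast
lemma cl_total: "classical R \<Longrightarrow> x \<in> Zset \<Longrightarrow> y \<in> Zset \<Longrightarrow> R x y \<or> R y x"
  using cl_total0 by blast
lemma cl_trans: "classical R \<Longrightarrow> R x y \<Longrightarrow> R y w \<Longrightarrow> R x w"
proof -
  assume R: "classical R" and a: "R x y" "R y w"
  have "x \<in> Zset" "y \<in> Zset" "w \<in> Zset" using cl_Z[OF R a(1)] cl_Z[OF R a(2)] by auto
  thus ?thesis using cl_trans0[OF R] a by blast
qed
lemma cl_refl: "classical R \<Longrightarrow> x \<in> Zset \<Longrightarrow> R x x"
  using cl_total by blast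
lemma cl_t: "classical R \<Longrightarrow> (t1, q) \<in> Zset \<Longrightarrow> (t2, q) \<in> Zset \<Longrightarrow> t1 < t2 \<Longrightarrow> R (t1,q) (t2,q) \<and> \<not> R (t2,q) (t1,q)"
  using cl_t0 unfolding strict_def by blast
lemma cl_q: "classical R \<Longrightarrow> (t, q1) \<in> Zset \<Longrightarrow> (t, q2) \<in> Zset \<Longrightarrow> q1 < q2 \<Longrightarrow> R (t,q2) (t,q1) \<and> \<not> R (t,q1) (t,q2)"
  using cl_q0 unfolding strict_def by blast
lemma cl_closed1: "classical R \<Longrightarrow> z \<in> Zset \<Longrightarrow> closedin (top_of_set Zset) {x\<in>Zset. R x z}"
  using cl_c0 by blast
lemma cl_closed2: "classical R \<Longrightarrow> z \<in> Zset \<Longrightarrow> closedin (top_of_set Zset) {x\<in>Zset. R z x}"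
  using cl_c0 by blast

lemma cl_dom:
  assumes R: "classical R" and "(t1,q1) \<in> Zset" "(t2,q2) \<in> Zset" "t1 \<le> t2" "q2 \<le> q1" "(t1,q1) \<noteq> (t2,q2)"
  shows "R (t1,q1) (t2,q2) \<and> \<not> R (t2,q2) (t1,q1)"
proof -
  have m: "(t1,q2) \<in> Zset" using assms by (auto simp: Zset_mem)
  have a: "R (t1,q1) (t1,q2)" "q2 < q1 \<Longrightarrow> \<not> R (t1,q2) (t1,q1)"
    using cl_q[OF R m assms(2)] cl_refl[OF R m] assms by (cases "q2 < q1"; auto)+
  have b: "R (t1,q2) (t2,q2)" "t1 < t2 \<Longrightarrow> \<not> R (t2,q2) (t1,q2)"
    using cl_t[OF R m assms(3)] cl_refl[OF R m] assms by (cases "t1 < t2"; auto)+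
  have c: "q2 < q1 \<or> t1 < t2" using assms by (auto simp: Zset_mem)
  show ?thesis
  proof
    show "R (t1,q1) (t2,q2)" using a b cl_trans[OF R] by blast
    show "\<not> R (t2,q2) (t1,q1)"
    proof
      assume h: "R (t2,q2) (t1,q1)"
      show False using c
      proof
        assume "q2 < q1" thus False using h a b cl_trans[OF R] by blast
      next
        assume "t1 < t2" thus False using h a b cl_trans[OF R] by blast
      qed
    qed
  qed
qed

lemma closedin_Z_lim:
  assumes "closedin (top_of_set Zset) C" "eventually (\<lambda>n. f n \<in> C) sequentially" "f \<longlonglongrightarrow> l"
  shows "l \<in> C"
proof -
  obtain T where T: "closed T" "C = Zset \<inter> T" using assms(1) closedin_closed by metis
  have "l \<in> T" using Lim_in_closed_set[OF T(1) _ _ assms(3)] assms(2) T(2)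
    by (simp add: eventually_mono)
  moreover have "l \<in> Zset" using Lim_in_closed_set[OF closed_Zset _ _ assms(3)] assms(2) T(2)
    by (simp add: eventually_mono)
  ultimately show ?thesis using T by auto
qed

lemma openin_Z_ev:
  assumes "openin (top_of_set Zset) U" "l \<in> U" "f \<longlonglongrightarrow> l" "\<And>n. f n \<in> Zset"
  shows "eventually (\<lambda>n. f n \<in> U) sequentially"
proof -
  obtain V where V: "open V" "U = Zset \<inter> V" using assms(1) openin_open by metis
  have "eventually (\<lambda>n. f n \<in> V) sequentially" using V assms topological_tendstoD by blast
  thus ?thesis using V assms(4) by (simp add: eventually_mono)
qed

lemma cl_open_strict1: "classical R \<Longrightarrow> z \<in> Zset \<Longrightarrow> openin (top_of_set Zset) {x\<in>Zset. \<not> R z x}"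
proof -
  assume R: "classical R" and z: "z \<in> Zset"
  have "{x\<in>Zset. \<not> R z x} = Zset - {x\<in>Zset. R z x}" by auto
  thus ?thesis using cl_closed2[OF R z] by (simp add: openin_diff)
qed
lemma cl_open_strict2: "classical R \<Longrightarrow> z \<in> Zset \<Longrightarrow> openin (top_of_set Zset) {x\<in>Zset. \<not> R x z}"
proof -
  assume R: "classical R" and z: "z \<in> Zset"
  have "{x\<in>Zset. \<not> R x z} = Zset - {x\<in>Zset. R x z}" by auto
  thus ?thesis using cl_closed1[OF R z] by (simp add: openin_diff)
qed

lemma connected_Zset: "connected Zset"
  using convex_Zset convex_connected by blast

lemma cl_graph_closed:
  assumes R: "classical R"
  shows "closed {p. R (fst p) (snd p)}"
  unfolding closed_sequential_limits
proof (intro allI impI, elim conjE)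
  fix s and l :: "alloc \<times> alloc"
  assume s: "\<forall>n. s n \<in> {p. R (fst p) (snd p)}" and lim: "s \<longlonglongrightarrow> l"
  define x where "x = fst l" define y where "y = snd l"
  have sx: "(\<lambda>n. fst (s n)) \<longlonglongrightarrow> x" unfolding x_def by (intro tendsto_fst lim)
  have sy: "(\<lambda>n. snd (s n)) \<longlonglongrightarrow> y" unfolding y_def by (intro tendsto_snd lim)
  have sZ: "\<And>n. fst (s n) \<in> Zset \<and> snd (s n) \<in> Zset" using s cl_Z[OF R] by blast
  have xZ: "x \<in> Zset" using Lim_in_closed_set[OF closed_Zset _ _ sx] sZ by auto
  have yZ: "y \<in> Zset" using Lim_in_closed_set[OF closed_Zset _ _ sy] sZ by auto
  have "R x y"
  proof (rule ccontr)
    assume nxy: "\<not> R x y"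
    hence yx: "R y x" using cl_total[OF R xZ yZ] by auto
    show False
    proof (cases "\<exists>w\<in>Zset. \<not> R w y \<and> \<not> R x w")
      case True
      then obtain w where w: "w \<in> Zset" "\<not> R w y" "\<not> R x w" by blast
      have e1: "eventually (\<lambda>n. snd (s n) \<in> {u\<in>Zset. \<not> R w u}) sequentially"
        by (rule openin_Z_ev[OF cl_open_strict1[OF R w(1)] _ sy]) (use w yZ sZ in auto)
      have e2: "eventually (\<lambda>n. fst (s n) \<in> {u\<in>Zset. \<not> R u w}) sequentially"
        by (rule openin_Z_ev[OF cl_open_strict2[OF R w(1)] _ sx]) (use w xZ sZ in auto)
      from eventually_conj[OF e1 e2] obtain n where
        "\<not> R w (snd (s n))" "\<not> R (fst (s n)) w"
        using eventually_happens'[OF trivial_limit_sequentially] by (metis (mono_tags, lifting) mem_Collect_eq)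
      moreover have "R (fst (s n)) (snd (s n))" using s by auto
      moreover have "R (snd (s n)) w" using calculation(1) cl_total[OF R w(1)] sZ by blast
      ultimately show False using cl_trans[OF R] by blast
    next
      case False
      define U where "U = {u\<in>Zset. \<not> R x u}"
      have U2: "U = {u\<in>Zset. R u y}"
        unfolding U_def using False nxy cl_trans[OF R] by blast
      have "openin (top_of_set Zset) U" unfolding U_def by (rule cl_open_strict1[OF R xZ])
      moreover have "closedin (top_of_set Zset) U" unfolding U2 by (rule cl_closed1[OF R yZ])
      ultimately have "U = {} \<or> U = Zset" using connected_Zset connected_clopen by blast
      moreover have "y \<in> U" using U2 yZ cl_refl[OF R] by auto
      moreover have "x \<notin> U" using U_def cl_refl[OF R xZ] by auto
      ultimately show False using xZ by auto
    qed
  qed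
  thus "l \<in> {p. R (fst p) (snd p)}" by (simp add: x_def y_def)
qed

lemma closed_pre: "continuous_on UNIV f \<Longrightarrow> closed T \<Longrightarrow> closed (f -` T)"
  using continuous_closed_preimage[of UNIV f T] by simp

lemma cl_graph_closed':
  assumes R: "classical R"
  shows "closed {p. R (snd p) (fst p)}"
proof -
  have e: "{p. R (snd p) (fst p)} = (\<lambda>p. (snd p, fst p)) -` {p. R (fst p) (snd p)}" by auto
  have c: "continuous_on UNIV (\<lambda>p::alloc\<times>alloc. (snd p, fst p))" by (intro continuous_intros)
  have "closed ((\<lambda>p. (snd p, fst p)) -` {p. R (fst p) (snd p)})" by (rule closed_pre[OF c cl_graph_closed[OF R]])
  thus ?thesis by (simp only: e)
qed

lemma lt_of_indiff:
  assumes b: "classical b" and i: "b (t,l) z" and z: "z \<in> Zset" and l: "l < snd z"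
  shows "t < fst z"
proof (rule ccontr)
  assume h: "\<not> t < fst z"
  have xZ: "(t,l) \<in> Zset" using cl_Z[OF b i] by auto
  obtain tz qz where zz: "z = (tz,qz)" by (cases z)
  have "\<not> b (t,l) (tz,qz)" using cl_dom[OF b, of tz qz t l] z xZ zz h l by auto
  thus False using i zz by simp
qed

lemma uniq_t:
  assumes b: "classical b" and "b (t,l) z" "b z (t,l)" "b (t',l) z" "b z (t',l)"
  shows "t = t'"
proof (rule ccontr)
  assume ne: "t \<noteq> t'"
  have Z: "(t,l) \<in> Zset" "(t',l) \<in> Zset" using cl_Z[OF b] assms by blast+
  have "b (t',l) (t,l)" "b (t,l) (t',l)" using cl_trans[OF b] assms by blast+
  moreover have "t < t' \<or> t' < t" using ne by auto
  ultimately show False using cl_t[OF b Z(1) Z(2)] cl_t[OF b Z(2) Z(1)] by blast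
qed

lemma conn_closed_inter:
  "connected S \<Longrightarrow> closed A \<Longrightarrow> closed B \<Longrightarrow> S \<subseteq> A \<union> B \<Longrightarrow> A \<inter> S \<noteq> {} \<Longrightarrow> B \<inter> S \<noteq> {} \<Longrightarrow> A \<inter> B \<inter> S \<noteq> {}"
  unfolding connected_closed by blast

lemma cl_domw:
  assumes R: "classical R" and "(t1,q1) \<in> Zset" "(t2,q2) \<in> Zset" "t1 \<le> t2" "q2 \<le> q1"
  shows "R (t1,q1) (t2,q2)"
proof (cases "(t1,q1) = (t2,q2)")
  case True thus ?thesis using cl_refl[OF R] assms(2) by simp
next
  case False thus ?thesis using cl_dom[OF R assms(2-5)] by blast
qed

lemma ivt_pref:
  fixes p :: "real \<Rightarrow> alloc"
  assumes b: "classical b" and z: "z \<in> Zset" and cd: "c \<le> d" and pc: "continuous_on {c..d} p"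
  and pZ: "\<And>s. s \<in> {c..d} \<Longrightarrow> p s \<in> Zset" and h1: "b (p c) z" and h2: "b z (p d)"
  shows "\<exists>s\<in>{c..d}. b (p s) z \<and> b z (p s)"
proof -
  obtain T1 where T1: "closed T1" "{x\<in>Zset. b x z} = Zset \<inter> T1"
    using closedin_closed[THEN iffD1, OF cl_closed1[OF b z]] by blast
  obtain T2 where T2: "closed T2" "{x\<in>Zset. b z x} = Zset \<inter> T2"
    using closedin_closed[THEN iffD1, OF cl_closed2[OF b z]] by blast
  define A where "A = {c..d} \<inter> p -` T1"
  define B where "B = {c..d} \<inter> p -` T2"
  have cA: "closed A" unfolding A_def by (rule continuous_closed_preimage[OF pc closed_atLeastAtMost T1(1)])
  have cB: "closed B" unfolding B_def by (rule continuous_closed_preimage[OF pc closed_atLeastAtMost T2(1)])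
  have memA: "s \<in> A \<longleftrightarrow> b (p s) z" if "s \<in> {c..d}" for s
  proof -
    have "p s \<in> {x\<in>Zset. b x z} \<longleftrightarrow> p s \<in> Zset \<inter> T1" by (simp only: T1(2))
    thus ?thesis using pZ[OF that] that unfolding A_def by simp
  qed
  have memB: "s \<in> B \<longleftrightarrow> b z (p s)" if "s \<in> {c..d}" for s
  proof -
    have "p s \<in> {x\<in>Zset. b z x} \<longleftrightarrow> p s \<in> Zset \<inter> T2" by (simp only: T2(2))
    thus ?thesis using pZ[OF that] that unfolding B_def by simp
  qed
  have cov: "{c..d} \<subseteq> A \<union> B"
  proof
    fix s assume s: "s \<in> {c..d}"
    have "b (p s) z \<or> b z (p s)" using cl_total[OF b pZ[OF s] z] .
    thus "s \<in> A \<union> B" using memA[OF s] memB[OF s] by blast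
  qed
  have "c \<in> A \<inter> {c..d}" using memA h1 cd by auto
  moreover have "d \<in> B \<inter> {c..d}" using memB h2 cd by auto
  ultimately have "A \<inter> B \<inter> {c..d} \<noteq> {}" using conn_closed_inter[OF connected_Icc cA cB cov] by blast
  then obtain s where "s \<in> {c..d}" "s \<in> A" "s \<in> B" by blast
  thus ?thesis using memA memB by blast
qed

lemma exist_indiff:
  assumes b: "classical b" and z: "z \<in> Zset" and l: "0 \<le> l" "l < snd z" and h: "b (0,l) z"
  shows "\<exists>t. 0 \<le> t \<and> t < fst z \<and> b (t,l) z \<and> b z (t,l)"
proof -
  obtain tz qz where zz: "z = (tz,qz)" by (cases z)
  have lz: "l \<le> 1" "0 \<le> tz" "qz \<le> 1" using z l zz by (auto simp: Zset_mem)
  have h2: "b (tz,qz) (tz,l)" using cl_domw[OF b, of tz qz tz l] z zz l lz by (auto simp: Zset_mem)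
  have pc: "continuous_on {0..tz} (\<lambda>s::real. (s,l))" by (intro continuous_intros)
  have pZ: "\<And>s. s \<in> {0..tz} \<Longrightarrow> (s,l) \<in> Zset" using l lz by (auto simp: Zset_mem)
  obtain s where s: "s \<in> {0..tz}" "b (s,l) z" "b z (s,l)"
    using ivt_pref[OF b z lz(2) pc pZ] h h2 zz by auto
  have "s < fst z" using lt_of_indiff[OF b s(2) z l(2)] .
  thus ?thesis using s by auto
qed

lemma sc_no_double:
  assumes sc: "single_crossing a b" and a: "classical a" and b: "classical b" and z: "z \<in> Zset"
  and "a x z" "a z x" "b x z" "b z x"
  shows "x = z"
proof -
  have xZ: "x \<in> Zset" using cl_Z[OF a] assms by blast
  have "x \<in> indiff_set a z \<inter> indiff_set b z" using assms xZ by (auto simp: indiff_set_def indiff_def)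
  moreover have "z \<in> indiff_set a z \<inter> indiff_set b z"
    using assms z cl_refl[OF a z] cl_refl[OF b z] by (auto simp: indiff_set_def indiff_def)
  ultimately show ?thesis using sc[unfolded single_crossing_def, rule_format, OF z z] by blast
qed

lemma path_sign:
  fixes g :: "real \<Rightarrow> alloc" and l :: "real \<Rightarrow> real"
  assumes a: "classical a" and b: "classical b" and sc: "single_crossing a b"
  and gc: "continuous_on {0..1} g" and gZ: "\<And>s. s \<in> {0..1} \<Longrightarrow> g s \<in> Zset"
  and lc: "continuous_on {0..1} l"
  and lb: "\<And>s. s \<in> {0..1} \<Longrightarrow> 0 \<le> l s \<and> l s < snd (g s) \<and> b (0, l s) (g s)"
  and w0: "b (t0, l 0) (g 0)" "b (g 0) (t0, l 0)" "\<not> a (t0, l 0) (g 0)"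
  and w1: "b (t1, l 1) (g 1)" "b (g 1) (t1, l 1)" "\<not> a (g 1) (t1, l 1)"
  shows False
proof -
  have cg: "compact (g ` {0..1})" by (rule compact_continuous_image[OF gc compact_Icc])
  obtain M where M: "M > 0" "\<And>x. x \<in> g ` {0..1} \<Longrightarrow> norm x \<le> M"
    using bounded_pos[THEN iffD1, OF compact_imp_bounded[OF cg]] by blast
  have Mb: "fst (g s) \<le> M" if s: "s \<in> {0..1}" for s
  proof -
    have "fst (g s) \<le> norm (fst (g s))" by simp
    also have "\<dots> \<le> norm (g s)" using norm_fst_le[of "fst (g s)" "snd (g s)"] by simp
    also have "\<dots> \<le> M" using M(2) s by blast
    finally show ?thesis .
  qed
  define K where "K = {0..1::real} \<times> {0..M}"
  have Kc: "compact K" unfolding K_def by (intro compact_Times compact_Icc)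
  have c1: "continuous_on K (\<lambda>p. g (fst p))"
    by (rule continuous_on_compose2[OF gc continuous_on_fst[OF continuous_on_id]]) (auto simp: K_def)
  have c2: "continuous_on K (\<lambda>p. l (fst p))"
    by (rule continuous_on_compose2[OF lc continuous_on_fst[OF continuous_on_id]]) (auto simp: K_def)
  define f where "f = (\<lambda>p::real\<times>real. ((snd p, l (fst p)), g (fst p)))"
  have fc: "continuous_on K f" unfolding f_def
    by (intro continuous_on_Pair c1 c2 continuous_on_snd continuous_on_id)
  define Gb where "Gb = {p. b (fst p) (snd p)} \<inter> {p. b (snd p) (fst p)}"
  define Ga where "Ga = {p. a (fst p) (snd p)}"
  define Ga' where "Ga' = {p. a (snd p) (fst p)}"
  have cGb: "closed Gb" unfolding Gb_def by (rule closed_Int[OF cl_graph_closed[OF b] cl_graph_closed'[OF b]])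
  have cGa: "closed Ga" unfolding Ga_def using cl_graph_closed[OF a] .
  have cGa': "closed Ga'" unfolding Ga'_def using cl_graph_closed'[OF a] .
  define A' where "A' = K \<inter> f -` (Gb \<inter> Ga)"
  define B' where "B' = K \<inter> f -` (Gb \<inter> Ga')"
  have memA': "(s,t) \<in> A' \<longleftrightarrow> (s,t) \<in> K \<and> b (t, l s) (g s) \<and> b (g s) (t, l s) \<and> a (t, l s) (g s)" for s t
    by (simp add: A'_def f_def Gb_def Ga_def)
  have memB': "(s,t) \<in> B' \<longleftrightarrow> (s,t) \<in> K \<and> b (t, l s) (g s) \<and> b (g s) (t, l s) \<and> a (g s) (t, l s)" for s t
    by (simp add: B'_def f_def Gb_def Ga'_def)
  have clA': "closed A'" unfolding A'_def
    by (rule continuous_closed_preimage[OF fc compact_imp_closed[OF Kc] closed_Int[OF cGb cGa]])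
  have KA: "K \<inter> A' = A'" unfolding A'_def by blast
  have cA': "compact A'" using compact_Int_closed[OF Kc clA'] unfolding KA .
  have clB': "closed B'" unfolding B'_def
    by (rule continuous_closed_preimage[OF fc compact_imp_closed[OF Kc] closed_Int[OF cGb cGa']])
  have KB: "K \<inter> B' = B'" unfolding B'_def by blast
  have cB': "compact B'" using compact_Int_closed[OF Kc clB'] unfolding KB .
  define A where "A = fst ` A'"
  define B where "B = fst ` B'"
  have cA: "closed A" unfolding A_def
    by (intro compact_imp_closed compact_continuous_image[OF continuous_on_fst[OF continuous_on_id] cA'])
  have cB: "closed B" unfolding B_def
    by (intro compact_imp_closed compact_continuous_image[OF continuous_on_fst[OF continuous_on_id] cB'])
  have inA: "s \<in> A" if "(s,t) \<in> A'" for s t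
    using imageI[OF that, of fst] unfolding A_def by simp
  have inB: "s \<in> B" if "(s,t) \<in> B'" for s t
    using imageI[OF that, of fst] unfolding B_def by simp
  have cov: "{0..1} \<subseteq> A \<union> B"
  proof
    fix s :: real assume s: "s \<in> {0..1}"
    obtain t where t: "0 \<le> t" "t < fst (g s)" "b (t, l s) (g s)" "b (g s) (t, l s)"
      using exist_indiff[OF b gZ[OF s]] lb[OF s] by blast
    have K: "(s,t) \<in> K" using t Mb[OF s] s by (auto simp: K_def)
    have Z: "(t, l s) \<in> Zset" using cl_Z[OF b t(3)] by blast
    have "a (t, l s) (g s) \<or> a (g s) (t, l s)" using cl_total[OF a Z gZ[OF s]] .
    hence "(s,t) \<in> A' \<or> (s,t) \<in> B'" using K t memA' memB' by blast
    thus "s \<in> A \<union> B" using inA inB by blast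
  qed
  have "1 \<in> A"
  proof -
    have s: "(1::real) \<in> {0..1}" by simp
    have Z: "(t1, l 1) \<in> Zset" using cl_Z[OF b w1(1)] by blast
    have t0: "0 \<le> t1" using Z by (auto simp: Zset_mem)
    have "t1 < fst (g 1)" using lt_of_indiff[OF b w1(1) gZ[OF s]] lb[OF s] by blast
    hence K: "(1,t1) \<in> K" using t0 Mb[OF s] by (auto simp: K_def)
    have "a (t1, l 1) (g 1)" using cl_total[OF a Z gZ[OF s]] w1(3) by blast
    hence "(1,t1) \<in> A'" using K w1 memA' by blast
    thus ?thesis using inA by blast
  qed
  moreover have "0 \<in> B"
  proof -
    have s: "(0::real) \<in> {0..1}" by simp
    have Z: "(t0, l 0) \<in> Zset" using cl_Z[OF b w0(1)] by blast
    have tt: "0 \<le> t0" using Z by (auto simp: Zset_mem)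
    have "t0 < fst (g 0)" using lt_of_indiff[OF b w0(1) gZ[OF s]] lb[OF s] by blast
    hence K: "(0,t0) \<in> K" using tt Mb[OF s] by (auto simp: K_def)
    have "a (g 0) (t0, l 0)" using cl_total[OF a Z gZ[OF s]] w0(3) by blast
    hence "(0,t0) \<in> B'" using K w0 memB' by blast
    thus ?thesis using inB by blast
  qed
  ultimately have "A \<inter> B \<inter> {0..1} \<noteq> {}"
  proof -
    assume h: "1 \<in> A" "0 \<in> B"
    have "A \<inter> {0..1} \<noteq> {}" "B \<inter> {0..1} \<noteq> {}" using h by auto
    thus ?thesis using conn_closed_inter[OF connected_Icc cA cB cov] by blast
  qed
  then obtain s where s: "s \<in> A" "s \<in> B" "s \<in> {0..1}" by blast
  obtain p where p: "p \<in> A'" "s = fst p" using s(1) unfolding A_def by blast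
  obtain p' where p': "p' \<in> B'" "s = fst p'" using s(2) unfolding B_def by blast
  define t where "t = snd p"
  define t' where "t' = snd p'"
  have t: "(s,t) \<in> A'" using p unfolding t_def by simp
  have t': "(s,t') \<in> B'" using p' unfolding t'_def by simp
  have h1: "b (t, l s) (g s)" "b (g s) (t, l s)" "a (t, l s) (g s)"
    using t memA' by blast+
  have h2: "b (t', l s) (g s)" "b (g s) (t', l s)" "a (g s) (t', l s)"
    using t' memB' by blast+
  have "t = t'" using uniq_t[OF b h1(1,2) h2(1,2)] .
  hence "(t, l s) = g s" using sc_no_double[OF sc a b gZ[OF s(3)]] h1 h2 by blast
  hence "snd (g s) = l s" by (metis snd_conv)
  thus False using lb[OF s(3)] by linarith
qed

definition GP :: "pref \<Rightarrow> alloc \<Rightarrow> alloc \<Rightarrow> bool" where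
  "GP b x z \<longleftrightarrow> zless x z \<and> b x z \<and> b z x"

lemma GP_Z: "classical b \<Longrightarrow> GP b x z \<Longrightarrow> x \<in> Zset \<and> z \<in> Zset"
  unfolding GP_def using cl_Z by blast

lemma GP_pos: "classical b \<Longrightarrow> GP b x z \<Longrightarrow> 0 < fst z \<and> 0 < snd z"
proof -
  assume b: "classical b" and g: "GP b x z"
  have "x \<in> Zset" using GP_Z[OF b g] by blast
  moreover have "fst x < fst z" "snd x < snd z" using g by (auto simp: GP_def zless_def)
  ultimately show ?thesis by (cases x) (auto simp: Zset_mem)
qed

lemma not_double:
  assumes a: "classical a" and b: "classical b" and sc: "single_crossing a b" and g: "GP b x z"
  shows "\<not> a x z \<or> \<not> a z x"
proof (rule ccontr)
  assume "\<not> (\<not> a x z \<or> \<not> a z x)"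
  hence "x = z" using sc_no_double[OF sc a b] GP_Z[OF b g] g unfolding GP_def by blast
  thus False using g by (simp add: GP_def zless_def)
qed

lemma fixed_z:
  assumes a: "classical a" and b: "classical b" and sc: "single_crossing a b"
  and g1: "GP b x z" and g2: "GP b y z" and s1: "\<not> a x z" and s2: "\<not> a z y"
  shows False
proof -
  obtain t l where x: "x = (t,l)" by (cases x)
  obtain t' l' where y: "y = (t',l')" by (cases y)
  have zZ: "z \<in> Zset" using GP_Z[OF b g1] by blast
  have xZ: "(t,l) \<in> Zset" using GP_Z[OF b g1] x by blast
  have yZ: "(t',l') \<in> Zset" using GP_Z[OF b g2] y by blast
  define ll where "ll = (\<lambda>s::real. (1 - s) * l + s * l')"
  have lc: "continuous_on {0..1} ll" unfolding ll_def by (intro continuous_intros)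
  have b0: "b (0,l) z"
  proof -
    have "b (0,l) (t,l)" using cl_domw[OF b, of 0 l t l] xZ by (auto simp: Zset_mem)
    thus ?thesis using cl_trans[OF b] g1 x unfolding GP_def by blast
  qed
  have b0': "b (0,l') z"
  proof -
    have "b (0,l') (t',l')" using cl_domw[OF b, of 0 l' t' l'] yZ by (auto simp: Zset_mem)
    thus ?thesis using cl_trans[OF b] g2 y unfolding GP_def by blast
  qed
  have lz: "l < snd z" "l' < snd z" using g1 g2 x y by (auto simp: GP_def zless_def)
  have l0: "0 \<le> l" "0 \<le> l'" using xZ yZ by (auto simp: Zset_mem)
  have lb: "0 \<le> ll s \<and> ll s < snd z \<and> b (0, ll s) z" if s: "s \<in> {0..1}" for s
  proof -
    have s01: "0 \<le> s" "s \<le> 1" using s by auto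
    have e1: "ll s = l + s * (l' - l)" and e2: "ll s = l' + (1 - s) * (l - l')"
      by (simp_all add: ll_def algebra_simps)
    have m12: "min l l' \<le> ll s \<and> ll s \<le> max l l'"
    proof (cases "l \<le> l'")
      case True
      have "0 \<le> s * (l' - l)" using s01 True by simp
      moreover have "s * (l' - l) \<le> l' - l" using mult_right_mono[of s 1 "l' - l"] s01 True by simp
      moreover have "min l l' = l" "max l l' = l'" using True by auto
      ultimately show ?thesis using e1 by linarith
    next
      case False
      have "0 \<le> (1 - s) * (l - l')" using s01 False by simp
      moreover have "(1 - s) * (l - l') \<le> l - l'" using mult_right_mono[of "1 - s" 1 "l - l'"] s01 False by simp
      moreover have "min l l' = l'" "max l l' = l" using False by auto
      ultimately show ?thesis using e2 by linarith
    qed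
    have m1: "min l l' \<le> ll s" and m2: "ll s \<le> max l l'" using m12 by auto
    have "ll s < snd z" using m2 lz by (auto simp: max_def split: if_splits)
    moreover have "0 \<le> ll s" using m1 l0 by (auto simp: min_def split: if_splits)
    moreover have "b (0, ll s) z"
    proof -
      have zq: "snd z \<le> 1" using zZ by (cases z) (auto simp: Zset_mem)
      have "b (0, ll s) (0, min l l')"
        using cl_domw[OF b, of 0 "ll s" 0 "min l l'"] m1 l0 calculation zq
        by (auto simp: Zset_mem min_def)
      moreover have "b (0, min l l') z" using b0 b0' by (simp add: min_def)
      ultimately show ?thesis using cl_trans[OF b] by blast
    qed
    ultimately show ?thesis by blast
  qed
  have gc: "continuous_on {0..1} (\<lambda>s::real. z)" by (intro continuous_intros)
  show False
    apply (rule path_sign[OF a b sc gc _ lc, of t t'])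
    using zZ lb g1 g2 x y s1 s2 unfolding GP_def ll_def by auto
qed

lemma openin_ball: "openin (top_of_set Zset) U \<Longrightarrow> x \<in> U \<Longrightarrow> \<exists>e>0. \<forall>x'\<in>Zset. dist x' x < e \<longrightarrow> x' \<in> U"
  using openin_euclidean_subtopology_iff by blast

lemma dist_vert: "dist ((t::real), (l::real)) (t, l') = \<bar>l - l'\<bar>"
  by (simp add: dist_Pair_Pair dist_real_def)
lemma dist_horz: "dist ((t::real), (l::real)) (t', l) = \<bar>t - t'\<bar>"
  by (simp add: dist_Pair_Pair dist_real_def)

lemma strict_level:
  assumes b: "classical b" and z: "z \<in> Zset" and p: "0 < fst z" and q: "0 < snd z"
  shows "\<exists>l. 0 \<le> l \<and> l < snd z \<and> \<not> b z (0,l)"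
proof -
  obtain tz qz where zz: "z = (tz,qz)" by (cases z)
  have zq: "0 \<le> qz" "qz \<le> 1" using z zz by (auto simp: Zset_mem)
  have pZ: "(0,qz) \<in> Zset" using zq by (auto simp: Zset_mem)
  have "\<not> b (tz,qz) (0,qz)" using cl_dom[OF b pZ, of tz qz] z zz p by auto
  hence "(0,qz) \<in> {x\<in>Zset. \<not> b z x}" using pZ zz by simp
  then obtain e where e: "e > 0" "\<And>x'. x' \<in> Zset \<Longrightarrow> dist x' (0,qz) < e \<Longrightarrow> \<not> b z x'"
    using openin_ball[OF cl_open_strict1[OF b z]] by blast
  define l where "l = max 0 (qz - e/2)"
  have l: "0 \<le> l" "l \<le> qz" "qz - l < e" using e(1) zq unfolding l_def by auto
  have lZ: "(0,l) \<in> Zset" using l zq by (auto simp: Zset_mem)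
  have "dist ((0::real),l) (0,qz) = \<bar>l - qz\<bar>" by (simp add: dist_Pair_Pair dist_real_def)
  hence "dist ((0::real),l) (0,qz) < e" using l by linarith
  hence nb: "\<not> b z (0,l)" using e(2)[OF lZ] by blast
  have "l < qz" using q zz e(1) unfolding l_def by auto
  thus ?thesis using l nb zz by auto
qed

lemma GP_at_level:
  assumes b: "classical b" and z: "z \<in> Zset" and l: "0 \<le> l" "l < snd z" and h: "b (0,l) z"
  shows "\<exists>t. GP b (t,l) z"
proof -
  obtain t where "0 \<le> t" "t < fst z" "b (t,l) z" "b z (t,l)" using exist_indiff[OF b z l h] by blast
  thus ?thesis using l unfolding GP_def zless_def by auto
qed

lemma GP_exists:
  assumes b: "classical b" and z: "z \<in> Zset" and p: "0 < fst z" and q: "0 < snd z"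
  shows "\<exists>x. GP b x z"
proof -
  obtain l where l: "0 \<le> l" "l < snd z" "\<not> b z (0,l)" using strict_level[OF b z p q] by blast
  have "(0,l) \<in> Zset" using l z by (cases z) (auto simp: Zset_mem)
  hence "b (0,l) z" using cl_total[OF b _ z] l(3) by blast
  thus ?thesis using GP_at_level[OF b z l(1,2)] by blast
qed

lemma seg_sign:
  assumes a: "classical a" and b: "classical b" and sc: "single_crossing a b"
  and z1: "z1 \<in> Zset" and z2: "z2 \<in> Zset" and l0: "0 \<le> l"
  and segok: "\<And>s. s \<in> {0..1} \<Longrightarrow> l < snd ((1 - s) *\<^sub>R z1 + s *\<^sub>R z2) \<and> b (0,l) ((1 - s) *\<^sub>R z1 + s *\<^sub>R z2)"
  and g1: "GP b (t1,l) z1" "\<not> a (t1,l) z1" and g2: "GP b (t2,l) z2" "\<not> a z2 (t2,l)"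
  shows False
proof -
  define g where "g = (\<lambda>s::real. (1 - s) *\<^sub>R z1 + s *\<^sub>R z2)"
  have gc: "continuous_on {0..1} g" unfolding g_def by (intro continuous_intros)
  have gZ: "g s \<in> Zset" if "s \<in> {0..1}" for s
    unfolding g_def using convexD[OF convex_Zset z1 z2, of "1-s" s] that by auto
  have lc: "continuous_on {0..1} (\<lambda>s::real. l)" by (intro continuous_intros)
  have g0: "g 0 = z1" "g 1 = z2" unfolding g_def by auto
  have lb: "\<And>s. s \<in> {0..1} \<Longrightarrow> 0 \<le> l \<and> l < snd (g s) \<and> b (0, l) (g s)"
    using segok l0 unfolding g_def by blast
  have w: "b (t1, l) (g 0)" "b (g 0) (t1,l)" "\<not> a (t1,l) (g 0)" "b (t2,l) (g 1)" "b (g 1) (t2,l)" "\<not> a (g 1) (t2,l)"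
    using g0 g1 g2 unfolding GP_def by auto
  show False using path_sign[OF a b sc gc gZ lc _ w] lb by blast
qed

definition SA :: "pref \<Rightarrow> pref \<Rightarrow> alloc set" where
  "SA a b = {z. \<exists>x. GP b x z \<and> \<not> a x z}"
definition SB :: "pref \<Rightarrow> pref \<Rightarrow> alloc set" where
  "SB a b = {z. \<exists>x. GP b x z \<and> \<not> a z x}"
definition Zp :: "alloc set" where
  "Zp = {z\<in>Zset. 0 < fst z \<and> 0 < snd z}"

lemma allsignA:
  assumes a: "classical a" and b: "classical b" and sc: "single_crossing a b"
  and z: "z \<in> SA a b" and y: "GP b y z" shows "\<not> a y z"
proof -
  obtain x where x: "GP b x z" "\<not> a x z" using z unfolding SA_def by blast
  show ?thesis using not_double[OF a b sc y] fixed_z[OF a b sc x(1) y x(2)] by blast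
qed

lemma allsignB:
  assumes a: "classical a" and b: "classical b" and sc: "single_crossing a b"
  and z: "z \<in> SB a b" and y: "GP b y z" shows "\<not> a z y"
proof -
  obtain x where x: "GP b x z" "\<not> a z x" using z unfolding SB_def by blast
  show ?thesis using not_double[OF a b sc y] fixed_z[OF a b sc y x(1) _ x(2)] by blast
qed

lemma ball_level:
  assumes b: "classical b" and z0: "z0 \<in> Zset" and l: "0 \<le> l" "l < snd z0" "\<not> b z0 (0,l)"
  shows "\<exists>e>0. \<forall>z\<in>Zset. dist z0 z < e \<longrightarrow> l < snd z \<and> \<not> b z (0,l)"
proof -
  have lZ: "(0,l) \<in> Zset" using l z0 by (cases z0) (auto simp: Zset_mem)
  have "z0 \<in> {x\<in>Zset. \<not> b x (0,l)}" using z0 l by simp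
  then obtain e1 where e1: "e1 > 0" "\<And>x'. x' \<in> Zset \<Longrightarrow> dist x' z0 < e1 \<Longrightarrow> \<not> b x' (0,l)"
    using openin_ball[OF cl_open_strict2[OF b lZ]] by blast
  define e where "e = min e1 (snd z0 - l)"
  have "e > 0" using e1 l unfolding e_def by auto
  moreover have "l < snd z \<and> \<not> b z (0,l)" if "z \<in> Zset" "dist z0 z < e" for z
  proof
    have "dist (snd z0) (snd z) \<le> dist z0 z" by (rule dist_snd_le)
    thus "l < snd z" using that unfolding e_def dist_real_def by auto
    show "\<not> b z (0,l)" using e1(2)[OF that(1)] that(2) unfolding e_def by (simp add: dist_commute)
  qed
  ultimately show ?thesis by blast
qed

lemma seg_in_ball:
  assumes "z1 \<in> Zset \<inter> ball z0 e" "z2 \<in> Zset \<inter> ball z0 e" "s \<in> {0..1}"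
  shows "(1 - s) *\<^sub>R z1 + s *\<^sub>R z2 \<in> Zset \<inter> ball z0 e"
  using convexD[OF convex_Int[OF convex_Zset convex_ball] assms(1,2), of "1-s" s] assms(3) by auto

lemma open_SA:
  assumes a: "classical a" and b: "classical b" and sc: "single_crossing a b"
  shows "openin (top_of_set Zp) (Zp \<inter> SA a b)"
  unfolding openin_euclidean_subtopology_iff
proof (intro conjI ballI)
  show "Zp \<inter> SA a b \<subseteq> Zp" by blast
  fix z0 assume z0: "z0 \<in> Zp \<inter> SA a b"
  have z0Z: "z0 \<in> Zset" "0 < fst z0" "0 < snd z0" using z0 unfolding Zp_def by auto
  obtain l where l: "0 \<le> l" "l < snd z0" "\<not> b z0 (0,l)" using strict_level[OF b z0Z] by blast
  obtain e where e: "e > 0" "\<And>z. z \<in> Zset \<Longrightarrow> dist z0 z < e \<Longrightarrow> l < snd z \<and> \<not> b z (0,l)"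
    using ball_level[OF b z0Z(1) l] by blast
  have lZ: "(0,l) \<in> Zset" using l z0Z by (cases z0) (auto simp: Zset_mem)
  have bl: "b (0,l) z" if "z \<in> Zset" "\<not> b z (0,l)" for z using cl_total[OF b lZ that(1)] that(2) by blast
  have "z \<in> Zp \<inter> SA a b" if z: "z \<in> Zp" "dist z z0 < e" for z
  proof -
    have zZ: "z \<in> Zset" using z unfolding Zp_def by auto
    have zb: "z \<in> Zset \<inter> ball z0 e" using zZ z(2) by (simp add: dist_commute)
    have z0b: "z0 \<in> Zset \<inter> ball z0 e" using z0Z e(1) by simp
    obtain t0 where t0: "GP b (t0,l) z0" using GP_at_level[OF b z0Z(1) l(1,2) bl[OF z0Z(1) l(3)]] by blast
    have s0: "\<not> a (t0,l) z0" using allsignA[OF a b sc _ t0] z0 by blast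
    have ez: "l < snd z \<and> \<not> b z (0,l)" using e(2)[OF zZ] zb by (simp add: dist_commute)
    obtain t1 where t1: "GP b (t1,l) z" using GP_at_level[OF b zZ l(1)] ez bl[OF zZ] by blast
    have segok: "l < snd ((1 - s) *\<^sub>R z0 + s *\<^sub>R z) \<and> b (0,l) ((1 - s) *\<^sub>R z0 + s *\<^sub>R z)"
      if s: "s \<in> {0..1}" for s
    proof -
      define p where "p = (1 - s) *\<^sub>R z0 + s *\<^sub>R z"
      have p: "p \<in> Zset" "dist z0 p < e" using seg_in_ball[OF z0b zb s] unfolding p_def by auto
      have "l < snd p \<and> \<not> b p (0,l)" using e(2)[OF p] .
      thus ?thesis using bl[OF p(1)] unfolding p_def by blast
    qed
    have "\<not> a z (t1,l) \<Longrightarrow> False"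
      by (rule seg_sign[OF a b sc z0Z(1) zZ l(1) segok t0 s0 t1])
    hence "\<not> a (t1,l) z" using not_double[OF a b sc t1] by blast
    thus ?thesis using z t1 unfolding SA_def by blast
  qed
  thus "\<exists>e>0. \<forall>x'\<in>Zp. dist x' z0 < e \<longrightarrow> x' \<in> Zp \<inter> SA a b" using e(1) by blast
qed

lemma open_SB:
  assumes a: "classical a" and b: "classical b" and sc: "single_crossing a b"
  shows "openin (top_of_set Zp) (Zp \<inter> SB a b)"
  unfolding openin_euclidean_subtopology_iff
proof (intro conjI ballI)
  show "Zp \<inter> SB a b \<subseteq> Zp" by blast
  fix z0 assume z0: "z0 \<in> Zp \<inter> SB a b"
  have z0Z: "z0 \<in> Zset" "0 < fst z0" "0 < snd z0" using z0 unfolding Zp_def by auto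
  obtain l where l: "0 \<le> l" "l < snd z0" "\<not> b z0 (0,l)" using strict_level[OF b z0Z] by blast
  obtain e where e: "e > 0" "\<And>z. z \<in> Zset \<Longrightarrow> dist z0 z < e \<Longrightarrow> l < snd z \<and> \<not> b z (0,l)"
    using ball_level[OF b z0Z(1) l] by blast
  have lZ: "(0,l) \<in> Zset" using l z0Z by (cases z0) (auto simp: Zset_mem)
  have bl: "b (0,l) z" if "z \<in> Zset" "\<not> b z (0,l)" for z using cl_total[OF b lZ that(1)] that(2) by blast
  have "z \<in> Zp \<inter> SB a b" if z: "z \<in> Zp" "dist z z0 < e" for z
  proof -
    have zZ: "z \<in> Zset" using z unfolding Zp_def by auto
    have zb: "z \<in> Zset \<inter> ball z0 e" using zZ z(2) by (simp add: dist_commute)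
    have z0b: "z0 \<in> Zset \<inter> ball z0 e" using z0Z e(1) by simp
    obtain t0 where t0: "GP b (t0,l) z0" using GP_at_level[OF b z0Z(1) l(1,2) bl[OF z0Z(1) l(3)]] by blast
    have s0: "\<not> a z0 (t0,l)" using allsignB[OF a b sc _ t0] z0 by blast
    have ez: "l < snd z \<and> \<not> b z (0,l)" using e(2)[OF zZ] zb by (simp add: dist_commute)
    obtain t1 where t1: "GP b (t1,l) z" using GP_at_level[OF b zZ l(1)] ez bl[OF zZ] by blast
    have segok: "l < snd ((1 - s) *\<^sub>R z + s *\<^sub>R z0) \<and> b (0,l) ((1 - s) *\<^sub>R z + s *\<^sub>R z0)"
      if s: "s \<in> {0..1}" for s
    proof -
      define p where "p = (1 - s) *\<^sub>R z + s *\<^sub>R z0"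
      have p: "p \<in> Zset" "dist z0 p < e" using seg_in_ball[OF zb z0b s] unfolding p_def by auto
      have "l < snd p \<and> \<not> b p (0,l)" using e(2)[OF p] .
      thus ?thesis using bl[OF p(1)] unfolding p_def by blast
    qed
    have "\<not> a (t1,l) z \<Longrightarrow> False"
      by (rule seg_sign[OF a b sc zZ z0Z(1) l(1) segok t1 _ t0 s0])
    hence "\<not> a z (t1,l)" using not_double[OF a b sc t1] by blast
    thus ?thesis using z t1 unfolding SB_def by blast
  qed
  thus "\<exists>e>0. \<forall>x'\<in>Zp. dist x' z0 < e \<longrightarrow> x' \<in> Zp \<inter> SB a b" using e(1) by blast
qed

lemma connected_Zp: "connected Zp"
proof -
  have "Zp = {(0::real)<..} \<times> {0<..1::real}" unfolding Zp_def Zset_def by auto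
  moreover have "convex ({(0::real)<..} \<times> {0<..1::real})" by (intro convex_Times convex_real_interval)
  ultimately show ?thesis using convex_connected by metis
qed

lemma sign_global:
  assumes a: "classical a" and b: "classical b" and sc: "single_crossing a b"
  shows "(\<forall>x z. GP b x z \<longrightarrow> a x z) \<or> (\<forall>x z. GP b x z \<longrightarrow> a z x)"
proof -
  have cov: "Zp \<subseteq> (Zp \<inter> SA a b) \<union> (Zp \<inter> SB a b)"
  proof
    fix z assume z: "z \<in> Zp"
    have zz: "z \<in> Zset" "0 < fst z" "0 < snd z" using z unfolding Zp_def by auto
    obtain x where x: "GP b x z" using GP_exists[OF b zz] by blast
    have "\<not> a x z \<or> \<not> a z x" using not_double[OF a b sc x] .
    thus "z \<in> (Zp \<inter> SA a b) \<union> (Zp \<inter> SB a b)" using x z unfolding SA_def SB_def by blast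
  qed
  have dis: "(Zp \<inter> SA a b) \<inter> (Zp \<inter> SB a b) = {}"
  proof (rule ccontr)
    assume "(Zp \<inter> SA a b) \<inter> (Zp \<inter> SB a b) \<noteq> {}"
    then obtain z where "z \<in> SA a b" "z \<in> SB a b" by blast
    then obtain x y where "GP b x z" "\<not> a x z" "GP b y z" "\<not> a z y" unfolding SA_def SB_def by blast
    thus False using fixed_z[OF a b sc] by blast
  qed
  have "Zp \<inter> SA a b = {} \<or> Zp \<inter> SB a b = {}"
    using connected_Zp[unfolded connected_openin] open_SA[OF a b sc] open_SB[OF a b sc] cov dis by blast
  moreover have "z \<in> Zp" if "GP b x z" for x z
    using GP_pos[OF b that] GP_Z[OF b that] unfolding Zp_def by blast
  ultimately show ?thesis unfolding SA_def SB_def by blast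
qed

lemma tot_incl:
  assumes a: "classical a" and b: "classical b" and sc: "single_crossing a b"
  shows "(\<forall>z\<in>Zset. box z \<inter> {x. b x z} \<subseteq> box z \<inter> {x. a x z}) \<or>
         (\<forall>z\<in>Zset. box z \<inter> {x. a x z} \<subseteq> box z \<inter> {x. b x z})"
  using sign_global[OF a b sc]
proof
  assume H: "\<forall>x z. GP b x z \<longrightarrow> a x z"
  have "a x z" if z: "z \<in> Zset" and x: "x \<in> box z" and bx: "b x z" for x z
  proof (cases "x = z")
    case True thus ?thesis using cl_refl[OF a z] by simp
  next
    case False
    hence zl: "zless x z" using x unfolding box_def zle_def by auto
    have xZ: "x \<in> Zset" using x unfolding box_def by auto
    obtain tx qx where xx: "x = (tx,qx)" by (cases x)
    obtain tz qz where zz: "z = (tz,qz)" by (cases z)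
    have lt: "tx < tz" "qx < qz" using zl xx zz unfolding zless_def by auto
    have xq: "0 \<le> tx" "0 \<le> qx" "qx \<le> 1" using xZ xx by (auto simp: Zset_mem)
    have "b (0,qx) (tx,qx)" using cl_domw[OF b, of 0 qx tx qx] xq by (auto simp: Zset_mem)
    hence b0: "b (0,qx) z" using cl_trans[OF b] bx xx by blast
    obtain t' where t': "0 \<le> t'" "t' < fst z" "b (t',qx) z" "b z (t',qx)"
      using exist_indiff[OF b z xq(2) _ b0] lt zz by auto
    have "GP b (t',qx) z" using t' lt zz unfolding GP_def zless_def by auto
    hence a1: "a (t',qx) z" using H by blast
    have "tx \<le> t'"
    proof (rule ccontr)
      assume "\<not> tx \<le> t'"
      hence "\<not> b (tx,qx) (t',qx)" using cl_t[OF b, of t' qx tx] xq t' by (auto simp: Zset_mem)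
      moreover have "b (tx,qx) (t',qx)" using cl_trans[OF b] bx t'(4) xx by blast
      ultimately show False by blast
    qed
    hence "a (tx,qx) (t',qx)" using cl_domw[OF a, of tx qx t' qx] xq t' by (auto simp: Zset_mem)
    thus ?thesis using cl_trans[OF a] a1 xx by blast
  qed
  thus ?thesis by blast
next
  assume H: "\<forall>x z. GP b x z \<longrightarrow> a z x"
  have "b x z" if z: "z \<in> Zset" and x: "x \<in> box z" and ax: "a x z" for x z
  proof (cases "x = z")
    case True thus ?thesis using cl_refl[OF b z] by simp
  next
    case False
    hence zl: "zless x z" using x unfolding box_def zle_def by auto
    have xZ: "x \<in> Zset" using x unfolding box_def by auto
    obtain tx qx where xx: "x = (tx,qx)" by (cases x)
    obtain tz qz where zz: "z = (tz,qz)" by (cases z)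
    have lt: "tx < tz" "qx < qz" using zl xx zz unfolding zless_def by auto
    have xq: "0 \<le> tx" "0 \<le> qx" "qx \<le> 1" using xZ xx by (auto simp: Zset_mem)
    have zq: "qz \<le> 1" using z zz by (auto simp: Zset_mem)
    show "b x z"
    proof (rule ccontr)
      assume nb: "\<not> b x z"
      show False
      proof (cases "b (0,qx) z")
        case True
        obtain t' where t': "0 \<le> t'" "t' < fst z" "b (t',qx) z" "b z (t',qx)"
          using exist_indiff[OF b z xq(2) _ True] lt zz by auto
        have "GP b (t',qx) z" using t' lt zz unfolding GP_def zless_def by auto
        hence a1: "a z (t',qx)" using H by blast
        have "t' < tx"
        proof (rule ccontr)
          assume "\<not> t' < tx"
          hence "b (tx,qx) (t',qx)" using cl_domw[OF b, of tx qx t' qx] xq t' by (auto simp: Zset_mem)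
          hence "b x z" using cl_trans[OF b] t'(3) xx by blast
          thus False using nb by blast
        qed
        hence "\<not> a (tx,qx) (t',qx)" using cl_t[OF a, of t' qx tx] xq t' by (auto simp: Zset_mem)
        moreover have "a (tx,qx) (t',qx)" using cl_trans[OF a] ax a1 xx by blast
        ultimately show False by blast
      next
        case False
        have zp: "0 < fst z" "0 < snd z" using lt xq zz by auto
        obtain l where l: "0 \<le> l" "l < snd z" "\<not> b z (0,l)" using strict_level[OF b z zp] by blast
        have lZ: "(0,l) \<in> Zset" using l zz zq by (auto simp: Zset_mem)
        have bl: "b (0,l) z" using cl_total[OF b lZ z] l(3) by blast
        have qxl: "qx \<le> l"
        proof (rule ccontr)
          assume "\<not> qx \<le> l"
          hence "b (0,qx) (0,l)" using cl_domw[OF b, of 0 qx 0 l] xq l by (auto simp: Zset_mem)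
          thus False using bl False cl_trans[OF b] by blast
        qed
        define p where "p = (\<lambda>s::real. ((0::real), l + qx - s))"
        have pc: "continuous_on {qx..l} p" unfolding p_def by (intro continuous_intros)
        have pZ: "p s \<in> Zset" if "s \<in> {qx..l}" for s
          using that l zz zq xq unfolding p_def by (auto simp: Zset_mem)
        have pcz: "b (p qx) z" using bl unfolding p_def by simp
        have "(0,qx) \<in> Zset" using xq by (auto simp: Zset_mem)
        hence pdz: "b z (p l)" using False cl_total[OF b _ z] unfolding p_def by auto
        obtain s where s: "s \<in> {qx..l}" "b (p s) z" "b z (p s)"
          using ivt_pref[OF b z qxl pc pZ pcz pdz] by blast
        define q2 where "q2 = l + qx - s"
        have ps: "p s = (0,q2)" unfolding p_def q2_def by simp
        have q2r: "qx \<le> q2" "q2 \<le> l" using s(1) unfolding q2_def by auto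
        have "q2 \<noteq> qx" using s(2) False ps by auto
        hence q2g: "qx < q2" using q2r by auto
        have "GP b (0,q2) z" using s(2,3) ps zp q2r l unfolding GP_def zless_def by auto
        hence a1: "a z (0,q2)" using H by blast
        have "\<not> a (tx,qx) (0,q2)" using cl_dom[OF a, of 0 q2 tx qx] xq q2g q2r l zq zz
          by (auto simp: Zset_mem)
        moreover have "a (tx,qx) (0,q2)" using cl_trans[OF a] ax a1 xx by blast
        ultimately show False by blast
      qed
    qed
  qed
  thus ?thesis by blast
qed

lemma prec_total:
  assumes a: "classical a" and b: "classical b" and sc: "single_crossing a b" and ne: "a \<noteq> b"
  shows "prec a b \<or> prec b a"
  using tot_incl[OF a b sc] ne unfolding prec_def by auto

lemma prec_antisym:
  assumes a: "classical a" and b: "classical b" and sc: "single_crossing a b"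
  and p1: "prec a b" and p2: "prec b a"
  shows False
proof -
  define z where "z = ((1::real), (1::real))"
  have zZ: "z \<in> Zset" unfolding z_def by (simp add: Zset_mem)
  obtain x where x: "GP b x z" using GP_exists[OF b zZ] unfolding z_def by auto
  obtain t l where xx: "x = (t,l)" by (cases x)
  have xZ: "x \<in> Zset" using GP_Z[OF b x] by blast
  have tl: "t < 1" "l < 1" "0 \<le> t" "0 \<le> l" using x xx xZ unfolding GP_def zless_def z_def by (auto simp: Zset_mem)
  have xb: "x \<in> box z" using x xZ unfolding box_def zle_def GP_def by auto
  have ax: "a x z" using p1 xb x zZ unfolding prec_def GP_def by blast
  have azx: "a z x"
  proof (rule ccontr)
    assume n: "\<not> a z x"
    have "x \<in> {x'\<in>Zset. \<not> a z x'}" using n xZ by simp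
    then obtain e where e: "e > 0" "\<And>x'. x' \<in> Zset \<Longrightarrow> dist x' x < e \<Longrightarrow> \<not> a z x'"
      using openin_ball[OF cl_open_strict1[OF a zZ]] by blast
    define d where "d = min (e/2) ((1 - t)/2)"
    have d1: "d \<le> (1 - t)/2" "d \<le> e/2" unfolding d_def by (rule min.cobounded2, rule min.cobounded1)
    have d: "0 < d" "d < e" "t + d < 1" using e(1) tl d1 unfolding d_def by auto
    define x' where "x' = (t + d, l)"
    have x'Z: "x' \<in> Zset" using tl d unfolding x'_def by (auto simp: Zset_mem)
    have "dist x' x = \<bar>(t + d) - t\<bar>" unfolding x'_def xx by (simp add: dist_Pair_Pair dist_real_def)
    hence "dist x' x < e" using d by simp
    hence "\<not> a z x'" using e(2)[OF x'Z] by blast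
    hence ax': "a x' z" using cl_total[OF a x'Z zZ] by blast
    have "x' \<in> box z" using x'Z d tl unfolding box_def zle_def zless_def x'_def z_def by auto
    hence bx': "b x' z" using p2 ax' zZ unfolding prec_def by blast
    have "b x' x" using cl_trans[OF b] bx' x unfolding GP_def by blast
    moreover have "\<not> b (t + d, l) (t, l)" using cl_t[OF b, of t l "t + d"] tl d xZ xx x'Z x'_def by auto
    ultimately show False unfolding x'_def xx by blast
  qed
  have "x = z" using sc_no_double[OF sc a b zZ] ax azx x unfolding GP_def by blast
  thus False using x unfolding GP_def zless_def by auto
qed

lemma rich_cl: "rich_single_crossing D \<Longrightarrow> R \<in> D \<Longrightarrow> classical R"
  unfolding rich_single_crossing_def by blast
lemma rich_sc: "rich_single_crossing D \<Longrightarrow> a \<in> D \<Longrightarrow> b \<in> D \<Longrightarrow> a \<noteq> b \<Longrightarrow> single_crossing a b"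
  unfolding rich_single_crossing_def by blast
lemma rich_ex: "rich_single_crossing D \<Longrightarrow> x \<in> Zset \<Longrightarrow> y \<in> Zset \<Longrightarrow> zless x y \<Longrightarrow> \<exists>R\<in>D. indiff R x y"
  unfolding rich_single_crossing_def by blast

lemma totD: "rich_single_crossing D \<Longrightarrow> a \<in> D \<Longrightarrow> b \<in> D \<Longrightarrow> a \<noteq> b \<Longrightarrow> prec a b \<or> prec b a"
  using prec_total rich_cl rich_sc by metis

lemma antiD: "rich_single_crossing D \<Longrightarrow> a \<in> D \<Longrightarrow> b \<in> D \<Longrightarrow> prec a b \<Longrightarrow> prec b a \<Longrightarrow> False"
proof -
  assume r: "rich_single_crossing D" and ab: "a \<in> D" "b \<in> D" and p: "prec a b" "prec b a"
  have "a \<noteq> b" using p unfolding prec_def by auto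
  hence "single_crossing a b" using rich_sc[OF r ab] by blast
  thus False using prec_antisym[OF rich_cl[OF r ab(1)] rich_cl[OF r ab(2)] _ p] by blast
qed

lemma preceq_trans: "preceq a b \<Longrightarrow> preceq b c \<Longrightarrow> preceq a c"
  unfolding preceq_def prec_def by blast

lemma chain_up:
  assumes "\<forall>n. preceq (Rs n) (Rs (Suc n))" shows "m \<le> n \<Longrightarrow> preceq (Rs m) (Rs n)"
proof (induction n)
  case 0 thus ?case by (simp add: preceq_def)
next
  case (Suc n) thus ?case
    using assms preceq_trans by (cases "m = Suc n") (auto simp: preceq_def le_Suc_eq)
qed

lemma chain_down:
  assumes "\<forall>n. preceq (Rs (Suc n)) (Rs n)" shows "m \<le> n \<Longrightarrow> preceq (Rs n) (Rs m)"
proof (induction n)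
  case 0 thus ?case by (simp add: preceq_def)
next
  case (Suc n) thus ?case
    using assms preceq_trans by (cases "m = Suc n") (auto simp: preceq_def le_Suc_eq)
qed

lemma ray_up_open: "a \<in> D \<Longrightarrow> openin (order_top D) {S\<in>D. prec a S}"
proof -
  assume a: "a \<in> D"
  have "{S\<in>D. prec a S} \<in> ({{R \<in> D. prec R a} | a. a \<in> D} \<union> {{R \<in> D. prec a R} | a. a \<in> D})"
    using a by blast
  hence "openin (topology_generated_by ({{R \<in> D. prec R a} | a. a \<in> D} \<union> {{R \<in> D. prec a R} | a. a \<in> D})) {S\<in>D. prec a S}"
    by (rule topology_generated_by_Basis)
  hence "openin (order_top D) ({S\<in>D. prec a S} \<inter> D)" unfolding order_top_def by (rule openin_subtopology_Int)
  moreover have "{S\<in>D. prec a S} \<inter> D = {S\<in>D. prec a S}" by blast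
  ultimately show ?thesis by simp
qed

lemma ray_down_open: "a \<in> D \<Longrightarrow> openin (order_top D) {S\<in>D. prec S a}"
proof -
  assume a: "a \<in> D"
  have "{S\<in>D. prec S a} \<in> ({{R \<in> D. prec R a} | a. a \<in> D} \<union> {{R \<in> D. prec a R} | a. a \<in> D})"
    using a by blast
  hence "openin (topology_generated_by ({{R \<in> D. prec R a} | a. a \<in> D} \<union> {{R \<in> D. prec a R} | a. a \<in> D})) {S\<in>D. prec S a}"
    by (rule topology_generated_by_Basis)
  hence "openin (order_top D) ({S\<in>D. prec S a} \<inter> D)" unfolding order_top_def by (rule openin_subtopology_Int)
  moreover have "{S\<in>D. prec S a} \<inter> D = {S\<in>D. prec S a}" by blast
  ultimately show ?thesis by simp
qed

lemma ev_open:
  assumes l: "limitin (subtopology (order_top D) E) Rs R sequentially"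
  and U: "openin (order_top D) U" and R: "R \<in> U" and RE: "R \<in> E"
  shows "eventually (\<lambda>n. Rs n \<in> U) sequentially"
proof -
  have "openin (subtopology (order_top D) E) (U \<inter> E)" by (rule openin_subtopology_Int[OF U])
  hence "eventually (\<lambda>n. Rs n \<in> U \<inter> E) sequentially" using l R RE unfolding limitin_def by blast
  thus ?thesis by (simp add: eventually_mono)
qed

lemma PW:
  assumes A: "classical A" and B: "classical B" and sc: "single_crossing A B" and p: "prec A B"
  and zA: "zA \<in> Zset" and zB: "zB \<in> Zset" and hA: "A zA zB" and hB: "B zB zA"
  shows "zA = zB \<or> zless zA zB"
proof -
  obtain ta qa where a: "zA = (ta,qa)" by (cases zA)
  obtain tb qb where b: "zB = (tb,qb)" by (cases zB)
  have Za: "(ta,qa) \<in> Zset" and Zb: "(tb,qb) \<in> Zset" using zA zB a b by auto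
  have q: "qa \<le> qb"
  proof (rule ccontr)
    assume "\<not> qa \<le> qb" hence qq: "qb < qa" by simp
    show False
    proof (cases "ta \<le> tb")
      case True
      hence "\<not> B (tb,qb) (ta,qa)" using cl_dom[OF B Za Zb True] qq by auto
      thus False using hB a b by simp
    next
      case False
      hence tt: "tb < ta" by simp
      have zl: "zless zB zA" using tt qq a b unfolding zless_def by simp
      have bx: "zB \<in> box zA" using zl zB unfolding box_def zle_def by auto
      have AzB: "A zB zA" using p bx hB zA unfolding prec_def by blast
      have nB: "\<not> B zA zB"
      proof
        assume "B zA zB"
        hence "zB = zA" using sc_no_double[OF sc A B zA] AzB hA hB by blast
        thus False using zl unfolding zless_def by auto
      qed
      have "zB \<in> {x\<in>Zset. \<not> B zA x}" using nB zB by simp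
      then obtain e where e: "e > 0" "\<And>x'. x' \<in> Zset \<Longrightarrow> dist x' zB < e \<Longrightarrow> \<not> B zA x'"
        using openin_ball[OF cl_open_strict1[OF B zA]] by blast
      define d where "d = min (e/2) ((ta - tb)/2)"
      have d1: "d \<le> (ta - tb)/2" "d \<le> e/2" unfolding d_def by (rule min.cobounded2, rule min.cobounded1)
      have d: "0 < d" "d < e" "tb + d < ta" using e(1) tt d1 unfolding d_def by auto
      define x where "x = (tb + d, qb)"
      have xZ: "x \<in> Zset" using Zb d unfolding x_def by (auto simp: Zset_mem)
      have "dist x zB = \<bar>(tb + d) - tb\<bar>" unfolding x_def b by (simp add: dist_Pair_Pair dist_real_def)
      hence "dist x zB < e" using d by simp
      hence "\<not> B zA x" using e(2)[OF xZ] by blast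
      hence Bx: "B x zA" using cl_total[OF B xZ zA] by blast
      have "x \<in> box zA" using xZ d qq unfolding box_def zle_def zless_def x_def a by auto
      hence "A x zA" using p Bx zA unfolding prec_def by blast
      hence "A x zB" using cl_trans[OF A] hA by blast
      moreover have "\<not> A (tb + d, qb) (tb, qb)" using cl_t[OF A, of tb qb "tb + d"] Zb xZ d x_def by auto
      ultimately show False unfolding x_def b by blast
    qed
  qed
  show ?thesis
  proof (cases "qa = qb")
    case True
    have "ta = tb"
    proof (rule ccontr)
      assume "ta \<noteq> tb"
      hence "ta < tb \<or> tb < ta" by auto
      thus False
      proof
        assume "ta < tb"
        hence "\<not> B (tb,qa) (ta,qa)" using cl_t[OF B, of ta qa tb] Za Zb True by auto
        thus False using hB a b True by simp
      next
        assume "tb < ta"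
        hence "\<not> A (ta,qa) (tb,qa)" using cl_t[OF A, of tb qa ta] Za Zb True by auto
        thus False using hA a b True by simp
      qed
    qed
    thus ?thesis using True a b by simp
  next
    case False
    hence qq: "qa < qb" using q by simp
    have "ta < tb"
    proof (rule ccontr)
      assume "\<not> ta < tb" hence "tb \<le> ta" by simp
      hence "\<not> A (ta,qa) (tb,qb)" using cl_dom[OF A Zb Za] qq by auto
      thus False using hA a b by simp
    qed
    thus ?thesis using qq a b unfolding zless_def by simp
  qed
qed

lemma main_up:
  assumes r: "rich_single_crossing D" and ED: "E \<subseteq> D" and mech: "mechanism E F" and sp: "strategy_proof E F"
  and RE: "R \<in> E" and RsE: "\<forall>n. Rs n \<in> E" and mono: "\<forall>n. preceq (Rs n) (Rs (Suc n))"
  and lim: "limitin (subtopology (order_top D) E) Rs R sequentially"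
  shows "\<exists>L. ((\<lambda>n. F (Rs n)) \<longlongrightarrow> L) sequentially \<and> L \<in> indirect_pref F R"
proof -
  have RD: "R \<in> D" using ED RE by auto
  have RsD: "Rs n \<in> D" for n using ED RsE by auto
  have clR: "classical R" using rich_cl[OF r RD] .
  have clRs: "classical (Rs n)" for n using rich_cl[OF r RsD] .
  define z where "z = F R"
  define zs where "zs = (\<lambda>n. F (Rs n))"
  have zZ: "z \<in> Zset" using mech RE unfolding mechanism_def z_def by auto
  have zsZ: "zs n \<in> Zset" for n using mech RsE unfolding mechanism_def zs_def by auto
  have sp1: "Rs n (zs n) z" for n using sp RE RsE unfolding strategy_proof_def z_def zs_def by auto
  have sp2: "R z (zs n)" for n using sp RE RsE unfolding strategy_proof_def z_def zs_def by auto
  have sp3: "Rs n (zs n) (zs m)" for n m using sp RsE unfolding strategy_proof_def zs_def by auto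
  have below: "preceq (Rs n) R" for n
  proof (rule ccontr)
    assume nb: "\<not> preceq (Rs n) R"
    hence ne: "Rs n \<noteq> R" unfolding preceq_def by auto
    hence pR: "prec R (Rs n)" using totD[OF r RsD RD] nb unfolding preceq_def by blast
    have "eventually (\<lambda>k. Rs k \<in> {S\<in>D. prec S (Rs n)}) sequentially"
      by (rule ev_open[OF lim ray_down_open[OF RsD] _ RE]) (use RD pR in blast)
    then obtain N where N: "\<forall>k\<ge>N. Rs k \<in> {S\<in>D. prec S (Rs n)}" unfolding eventually_sequentially by blast
    define k where "k = max n N"
    have k: "k \<ge> n" "prec (Rs k) (Rs n)" using N unfolding k_def by auto
    have "preceq (Rs n) (Rs k)" using chain_up[OF mono k(1)] .
    hence "Rs n = Rs k \<or> prec (Rs n) (Rs k)" unfolding preceq_def by auto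
    thus False
    proof
      assume "Rs n = Rs k" thus False using k(2) unfolding prec_def by auto
    next
      assume "prec (Rs n) (Rs k)" thus False using antiD[OF r RsD RsD] k(2) by blast
    qed
  qed
  have PWn: "zs n = z \<or> zless (zs n) z" for n
  proof (cases "Rs n = R")
    case True thus ?thesis unfolding zs_def z_def by simp
  next
    case False
    hence p: "prec (Rs n) R" using below[of n] unfolding preceq_def by auto
    show ?thesis by (rule PW[OF clRs clR rich_sc[OF r RsD RD False] p zsZ zZ sp1 sp2])
  qed
  have PWs: "zs n = zs (Suc n) \<or> zless (zs n) (zs (Suc n))" for n
  proof (cases "Rs n = Rs (Suc n)")
    case True thus ?thesis unfolding zs_def by simp
  next
    case False
    hence p: "prec (Rs n) (Rs (Suc n))" using mono unfolding preceq_def by auto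
    show ?thesis by (rule PW[OF clRs clRs rich_sc[OF r RsD RsD False] p zsZ zsZ sp3 sp3])
  qed
  define tt where "tt = (\<lambda>n. fst (zs n))"
  define qq where "qq = (\<lambda>n. snd (zs n))"
  have inct: "incseq tt" unfolding tt_def
  proof (rule incseq_SucI)
    fix n show "fst (zs n) \<le> fst (zs (Suc n))" using PWs[of n] unfolding zless_def by auto
  qed
  have incq: "incseq qq" unfolding qq_def
  proof (rule incseq_SucI)
    fix n show "snd (zs n) \<le> snd (zs (Suc n))" using PWs[of n] unfolding zless_def by auto
  qed
  have bt: "\<forall>i. tt i \<le> fst z" using PWn unfolding tt_def zless_def by (metis order.refl less_imp_le)
  have bq: "\<forall>i. qq i \<le> snd z" using PWn unfolding qq_def zless_def by (metis order.refl less_imp_le)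
  obtain Lt where Lt: "tt \<longlonglongrightarrow> Lt" "\<forall>i. tt i \<le> Lt" using incseq_convergent[OF inct bt] by blast
  obtain Lq where Lq: "qq \<longlonglongrightarrow> Lq" "\<forall>i. qq i \<le> Lq" using incseq_convergent[OF incq bq] by blast
  define L where "L = (Lt, Lq)"
  have "(\<lambda>n. (tt n, qq n)) \<longlonglongrightarrow> L" unfolding L_def by (intro tendsto_Pair Lt(1) Lq(1))
  moreover have "(\<lambda>n. (tt n, qq n)) = zs" unfolding tt_def qq_def by simp
  ultimately have zsL: "zs \<longlonglongrightarrow> L" by simp
  have LZ: "L \<in> Zset" using Lim_in_closed_set[OF closed_Zset _ _ zsL] zsZ by auto
  have Lt_le: "Lt \<le> fst z" using LIMSEQ_le_const2[OF Lt(1)] bt by blast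
  have Lq_le: "Lq \<le> snd z" using LIMSEQ_le_const2[OF Lq(1)] bq by blast
  have LZ': "0 \<le> Lt" "0 \<le> Lq" "Lq \<le> 1" using LZ unfolding L_def by (auto simp: Zset_mem)
  have zz: "z = (fst z, snd z)" by simp
  have zZ': "0 \<le> fst z" "snd z \<le> 1" using zZ zz by (metis Zset_mem)+
  have RzL: "R z L"
  proof -
    have "eventually (\<lambda>n. zs n \<in> {x\<in>Zset. R z x}) sequentially" using zsZ sp2 by simp
    thus ?thesis using closedin_Z_lim[OF cl_closed2[OF clR zZ] _ zsL] by blast
  qed
  have RLz: "R L z"
  proof (rule ccontr)
    assume nL: "\<not> R L z"
    have "L \<in> {x\<in>Zset. \<not> R x z}" using nL LZ by simp
    then obtain e where e: "e > 0" "\<And>x'. x' \<in> Zset \<Longrightarrow> dist x' L < e \<Longrightarrow> \<not> R x' z"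
      using openin_ball[OF cl_open_strict2[OF clR zZ]] by blast
    have Lqs: "Lq < snd z"
    proof (rule ccontr)
      assume "\<not> Lq < snd z" hence eq: "Lq = snd z" using Lq_le by simp
      have "R (Lt,Lq) (fst z, snd z)" using cl_domw[OF clR, of Lt Lq "fst z" "snd z"] LZ zZ Lt_le eq
        unfolding L_def by simp
      thus False using nL unfolding L_def by simp
    qed
    obtain w where w: "w \<in> Zset" "zless w z" "\<not> R w z" "\<And>P. classical P \<Longrightarrow> \<not> P L w"
    proof (cases "Lt < fst z")
      case True
      define d where "d = min (e/2) ((snd z - Lq)/2)"
      have d1: "d \<le> (snd z - Lq)/2" "d \<le> e/2" unfolding d_def by (rule min.cobounded2, rule min.cobounded1)
      have d: "0 < d" "d < e" "Lq + d < snd z" using e(1) Lqs d1 unfolding d_def by auto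
      define w where "w = (Lt, Lq + d)"
      have wZ: "w \<in> Zset" using LZ' d zZ' unfolding w_def by (auto simp: Zset_mem)
      have "dist w L = \<bar>(Lq + d) - Lq\<bar>" unfolding w_def L_def by (simp add: dist_Pair_Pair dist_real_def)
      hence "dist w L < e" using d by simp
      hence "\<not> R w z" using e(2)[OF wZ] by blast
      moreover have "zless w z" using True d unfolding w_def zless_def by simp
      moreover have "\<not> P L w" if P: "classical P" for P
        using cl_dom[OF P, of Lt "Lq + d" Lt Lq] wZ LZ d unfolding w_def L_def by auto
      ultimately show ?thesis using that wZ by blast
    next
      case False
      hence eqt: "Lt = fst z" using Lt_le by simp
      have "zs 0 \<noteq> z"
      proof
        assume "zs 0 = z"
        hence "qq 0 = snd z" unfolding qq_def by simp
        thus False using Lq(2) Lqs by (metis not_le)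
      qed
      hence "zless (zs 0) z" using PWn by blast
      moreover have "0 \<le> tt 0" using zsZ[of 0] unfolding tt_def by (metis Zset_mem prod.collapse)
      ultimately have tp: "0 < Lt" using eqt unfolding zless_def tt_def by auto
      define d where "d = min (e/2) (Lt/2)"
      have d1: "d \<le> Lt/2" "d \<le> e/2" unfolding d_def by (rule min.cobounded2, rule min.cobounded1)
      have d: "0 < d" "d < e" "d < Lt" using e(1) tp d1 unfolding d_def by auto
      define w where "w = (Lt - d, Lq)"
      have wZ: "w \<in> Zset" using LZ' d d1 unfolding w_def by (auto simp: Zset_mem)
      have "dist w L = \<bar>(Lt - d) - Lt\<bar>" unfolding w_def L_def by (simp add: dist_Pair_Pair dist_real_def)
      hence "dist w L < e" using d by simp
      hence "\<not> R w z" using e(2)[OF wZ] by blast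
      moreover have "zless w z" using eqt d Lqs unfolding w_def zless_def by simp
      moreover have "\<not> P L w" if P: "classical P" for P
        using cl_dom[OF P, of "Lt - d" Lq Lt Lq] wZ LZ d unfolding w_def L_def by auto
      ultimately show ?thesis using that wZ by blast
    qed
    obtain a where a: "a \<in> D" "indiff a w z" using rich_ex[OF r w(1) zZ w(2)] by blast
    have cla: "classical a" using rich_cl[OF r a(1)] .
    have aw: "a w z" "a z w" using a(2) unfolding indiff_def by auto
    have ne: "a \<noteq> R" using aw w(3) by auto
    have wb: "w \<in> box z" using w unfolding box_def zle_def by auto
    have "\<not> prec R a"
    proof
      assume "prec R a"
      hence "R w z" using wb aw zZ unfolding prec_def by blast
      thus False using w(3) by blast
    qed
    hence pa: "prec a R" using totD[OF r a(1) RD ne] by blast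
    have ev: "eventually (\<lambda>n. Rs n \<in> {S\<in>D. prec a S}) sequentially"
      by (rule ev_open[OF lim ray_up_open[OF a(1)] _ RE]) (use RD pa in blast)
    have ev2: "eventually (\<lambda>n. zs n \<in> {x\<in>Zset. a x z}) sequentially"
    proof (rule eventually_mono[OF ev])
      fix n assume "Rs n \<in> {S\<in>D. prec a S}"
      hence pn: "prec a (Rs n)" by simp
      have "zs n \<in> box z" using PWn[of n] zsZ[of n] unfolding box_def zle_def by auto
      hence "a (zs n) z" using pn sp1[of n] zZ unfolding prec_def by blast
      thus "zs n \<in> {x\<in>Zset. a x z}" using zsZ by simp
    qed
    have "L \<in> {x\<in>Zset. a x z}" using closedin_Z_lim[OF cl_closed1[OF cla zZ] ev2 zsL] .
    hence "a L w" using cl_trans[OF cla] aw(2) by blast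
    thus False using w(4)[OF cla] by blast
  qed
  have "L \<in> indirect_pref F R" using LZ RLz RzL unfolding indirect_pref_def indiff_def z_def by auto
  thus ?thesis using zsL unfolding zs_def by blast
qed

lemma main_down:
  assumes r: "rich_single_crossing D" and ED: "E \<subseteq> D" and mech: "mechanism E F" and sp: "strategy_proof E F"
  and RE: "R \<in> E" and RsE: "\<forall>n. Rs n \<in> E" and mono: "\<forall>n. preceq (Rs (Suc n)) (Rs n)"
  and lim: "limitin (subtopology (order_top D) E) Rs R sequentially"
  shows "\<exists>L. ((\<lambda>n. F (Rs n)) \<longlongrightarrow> L) sequentially \<and> L \<in> indirect_pref F R"
proof -
  have RD: "R \<in> D" using ED RE by auto
  have RsD: "Rs n \<in> D" for n using ED RsE by auto
  have clR: "classical R" using rich_cl[OF r RD] .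
  have clRs: "classical (Rs n)" for n using rich_cl[OF r RsD] .
  define z where "z = F R"
  define zs where "zs = (\<lambda>n. F (Rs n))"
  have zZ: "z \<in> Zset" using mech RE unfolding mechanism_def z_def by auto
  have zsZ: "zs n \<in> Zset" for n using mech RsE unfolding mechanism_def zs_def by auto
  have sp1: "Rs n (zs n) z" for n using sp RE RsE unfolding strategy_proof_def z_def zs_def by auto
  have sp2: "R z (zs n)" for n using sp RE RsE unfolding strategy_proof_def z_def zs_def by auto
  have sp3: "Rs n (zs n) (zs m)" for n m using sp RsE unfolding strategy_proof_def zs_def by auto
  have above: "preceq R (Rs n)" for n
  proof (rule ccontr)
    assume nb: "\<not> preceq R (Rs n)"
    hence ne: "R \<noteq> Rs n" unfolding preceq_def by auto
    hence pR: "prec (Rs n) R" using totD[OF r RD RsD] nb unfolding preceq_def by blast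
    have "eventually (\<lambda>k. Rs k \<in> {S\<in>D. prec (Rs n) S}) sequentially"
      by (rule ev_open[OF lim ray_up_open[OF RsD] _ RE]) (use RD pR in blast)
    then obtain N where N: "\<forall>k\<ge>N. Rs k \<in> {S\<in>D. prec (Rs n) S}" unfolding eventually_sequentially by blast
    define k where "k = max n N"
    have k: "k \<ge> n" "prec (Rs n) (Rs k)" using N unfolding k_def by auto
    have "preceq (Rs k) (Rs n)" using chain_down[OF mono k(1)] .
    hence "Rs k = Rs n \<or> prec (Rs k) (Rs n)" unfolding preceq_def by auto
    thus False
    proof
      assume "Rs k = Rs n" thus False using k(2) unfolding prec_def by auto
    next
      assume "prec (Rs k) (Rs n)" thus False using antiD[OF r RsD RsD] k(2) by blast
    qed
  qed
  have PWn: "z = zs n \<or> zless z (zs n)" for n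
  proof (cases "R = Rs n")
    case True thus ?thesis unfolding zs_def z_def by simp
  next
    case False
    hence p: "prec R (Rs n)" using above[of n] unfolding preceq_def by auto
    show ?thesis by (rule PW[OF clR clRs rich_sc[OF r RD RsD False] p zZ zsZ sp2 sp1])
  qed
  have PWs: "zs (Suc n) = zs n \<or> zless (zs (Suc n)) (zs n)" for n
  proof (cases "Rs (Suc n) = Rs n")
    case True thus ?thesis unfolding zs_def by simp
  next
    case False
    hence p: "prec (Rs (Suc n)) (Rs n)" using mono unfolding preceq_def by auto
    show ?thesis by (rule PW[OF clRs clRs rich_sc[OF r RsD RsD False] p zsZ zsZ sp3 sp3])
  qed
  define tt where "tt = (\<lambda>n. fst (zs n))"
  define qq where "qq = (\<lambda>n. snd (zs n))"
  have dect: "decseq tt" unfolding tt_def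
  proof (rule decseq_SucI)
    fix n show "fst (zs (Suc n)) \<le> fst (zs n)" using PWs[of n] unfolding zless_def by auto
  qed
  have decq: "decseq qq" unfolding qq_def
  proof (rule decseq_SucI)
    fix n show "snd (zs (Suc n)) \<le> snd (zs n)" using PWs[of n] unfolding zless_def by auto
  qed
  have bt: "\<forall>i. fst z \<le> tt i" using PWn unfolding tt_def zless_def by (metis order.refl less_imp_le)
  have bq: "\<forall>i. snd z \<le> qq i" using PWn unfolding qq_def zless_def by (metis order.refl less_imp_le)
  obtain Lt where Lt: "tt \<longlonglongrightarrow> Lt" "\<forall>i. Lt \<le> tt i" using decseq_convergent[OF dect bt] by blast
  obtain Lq where Lq: "qq \<longlonglongrightarrow> Lq" "\<forall>i. Lq \<le> qq i" using decseq_convergent[OF decq bq] by blast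
  define L where "L = (Lt, Lq)"
  have "(\<lambda>n. (tt n, qq n)) \<longlonglongrightarrow> L" unfolding L_def by (intro tendsto_Pair Lt(1) Lq(1))
  moreover have "(\<lambda>n. (tt n, qq n)) = zs" unfolding tt_def qq_def by simp
  ultimately have zsL: "zs \<longlonglongrightarrow> L" by simp
  have LZ: "L \<in> Zset" using Lim_in_closed_set[OF closed_Zset _ _ zsL] zsZ by auto
  have Lt_ge: "fst z \<le> Lt" using LIMSEQ_le_const[OF Lt(1)] bt by blast
  have Lq_ge: "snd z \<le> Lq" using LIMSEQ_le_const[OF Lq(1)] bq by blast
  have LZ': "0 \<le> Lt" "0 \<le> Lq" "Lq \<le> 1" using LZ unfolding L_def by (auto simp: Zset_mem)
  have zz: "z = (fst z, snd z)" by simp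
  have zZ': "0 \<le> fst z" "0 \<le> snd z" "snd z \<le> 1" using zZ zz by (metis Zset_mem)+
  have qq1: "qq n \<le> 1" for n using zsZ[of n] unfolding qq_def by (metis Zset_mem prod.collapse)
  have RzL: "R z L"
  proof -
    have "eventually (\<lambda>n. zs n \<in> {x\<in>Zset. R z x}) sequentially" using zsZ sp2 by simp
    thus ?thesis using closedin_Z_lim[OF cl_closed2[OF clR zZ] _ zsL] by blast
  qed
  have RLz: "R L z"
  proof (rule ccontr)
    assume nL: "\<not> R L z"
    have "L \<in> {x\<in>Zset. \<not> R x z}" using nL LZ by simp
    then obtain e where e: "e > 0" "\<And>x'. x' \<in> Zset \<Longrightarrow> dist x' L < e \<Longrightarrow> \<not> R x' z"
      using openin_ball[OF cl_open_strict2[OF clR zZ]] by blast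
    have Lts: "fst z < Lt"
    proof (rule ccontr)
      assume "\<not> fst z < Lt" hence eq: "Lt = fst z" using Lt_ge by simp
      have "R (Lt,Lq) (fst z, snd z)" using cl_domw[OF clR, of Lt Lq "fst z" "snd z"] LZ zZ Lq_ge eq
        unfolding L_def by simp
      thus False using nL unfolding L_def by simp
    qed
    have zq1: "snd z < 1"
    proof (rule ccontr)
      assume "\<not> snd z < 1" hence s1: "snd z = 1" using zZ' by simp
      have "zs n = z" for n using PWn[of n] qq1[of n] s1 unfolding zless_def qq_def by auto
      hence "tt 0 = fst z" unfolding tt_def by simp
      thus False using Lt(2) Lts by (metis not_le)
    qed
    define d where "d = min (e/4) ((Lt - fst z)/2)"
    have d1: "d \<le> (Lt - fst z)/2" "d \<le> e/4" unfolding d_def by (rule min.cobounded2, rule min.cobounded1)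
    have d: "0 < d" "fst z < Lt - d" using e(1) Lts d1 unfolding d_def by auto
    define d' where "d' = min (e/4) ((1 - Lq)/2)"
    have d1': "d' \<le> (1 - Lq)/2" "d' \<le> e/4" unfolding d'_def by (rule min.cobounded2, rule min.cobounded1)
    have d': "0 \<le> d'" "Lq < 1 \<Longrightarrow> 0 < d'" using e(1) LZ' unfolding d'_def by auto
    define u where "u = (Lt - d, Lq + d')"
    have uZ: "u \<in> Zset" using d d' d1' LZ' zZ' unfolding u_def by (auto simp: Zset_mem)
    have zu: "zless z u"
    proof -
      have "snd z < Lq + d'"
      proof (cases "Lq < 1")
        case True thus ?thesis using d'(2) Lq_ge by simp
      next
        case False thus ?thesis using zq1 d'(1) LZ' by simp
      qed
      thus ?thesis using d unfolding zless_def u_def by simp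
    qed
    have "dist u L \<le> dist u (Lt - d, Lq) + dist (Lt - d, Lq) L" by (rule dist_triangle)
    also have "\<dots> = \<bar>d'\<bar> + \<bar>d\<bar>" unfolding u_def L_def by (simp add: dist_Pair_Pair dist_real_def)
    also have "\<dots> < e" using d d' d1 d1' e(1) by simp
    finally have "dist u L < e" .
    hence nRu: "\<not> R u z" using e(2)[OF uZ] by blast
    have evq: "eventually (\<lambda>n. qq n \<le> Lq + d') sequentially"
    proof (cases "Lq < 1")
      case True
      have "eventually (\<lambda>n. qq n < Lq + d') sequentially"
        using order_tendstoD(2)[OF Lq(1)] d'(2)[OF True] by simp
      thus ?thesis by (simp add: eventually_mono)
    next
      case False hence "Lq = 1" using LZ' by simp
      hence "\<forall>n. qq n \<le> Lq + d'" using qq1 d'(1) by (metis add_increasing2)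
      thus ?thesis by (simp add: always_eventually)
    qed
    have dom: "\<not> P (zs n) u" if P: "classical P" and qn: "qq n \<le> Lq + d'" for P n
    proof -
      have "zs n = (tt n, qq n)" unfolding tt_def qq_def by simp
      moreover have "Lt - d \<le> tt n" "Lt - d \<noteq> tt n" using Lt(2) d by (metis diff_le_eq le_add_same_cancel1 less_imp_le order.trans, smt (verit))
      ultimately show ?thesis using cl_dom[OF P, of "Lt - d" "Lq + d'" "tt n" "qq n"] uZ zsZ[of n] qn
        unfolding u_def by auto
    qed
    obtain a where a: "a \<in> D" "indiff a z u" using rich_ex[OF r zZ uZ zu] by blast
    have cla: "classical a" using rich_cl[OF r a(1)] .
    have au: "a z u" "a u z" using a(2) unfolding indiff_def by auto
    have ne: "a \<noteq> R" using au nRu by auto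
    have "\<not> prec a R"
    proof
      assume pa: "prec a R"
      have "z \<in> {x\<in>Zset. \<not> R u x}" using nRu zZ by simp
      then obtain e2 where e2: "e2 > 0" "\<And>x'. x' \<in> Zset \<Longrightarrow> dist x' z < e2 \<Longrightarrow> \<not> R u x'"
        using openin_ball[OF cl_open_strict1[OF clR uZ]] by blast
      define h where "h = min (e2/2) ((Lt - d - fst z)/2)"
      have h1: "h \<le> (Lt - d - fst z)/2" "h \<le> e2/2" unfolding h_def by (rule min.cobounded2, rule min.cobounded1)
      have h: "0 < h" "h < e2" "fst z + h < Lt - d" using e2(1) d h1 unfolding h_def by auto
      define z' where "z' = (fst z + h, snd z)"
      have z'Z: "z' \<in> Zset" using zZ' h unfolding z'_def by (auto simp: Zset_mem)
      have "dist z' z = \<bar>(fst z + h) - fst z\<bar>" unfolding z'_def by (cases z) (simp add: dist_Pair_Pair dist_real_def)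
      hence "dist z' z < e2" using h by simp
      hence "\<not> R u z'" using e2(2)[OF z'Z] by blast
      hence Rz': "R z' u" using cl_total[OF clR z'Z uZ] by blast
      have "zless z' u" using h zu unfolding z'_def zless_def u_def by simp
      hence "z' \<in> box u" using z'Z unfolding box_def zle_def by auto
      hence "a z' u" using pa Rz' uZ unfolding prec_def by blast
      hence "a z' z" using cl_trans[OF cla] au(2) by blast
      moreover have "\<not> a (fst z + h, snd z) (fst z, snd z)"
        using cl_t[OF cla, of "fst z" "snd z" "fst z + h"] zZ z'Z h unfolding z'_def by auto
      ultimately show False unfolding z'_def by simp
    qed
    hence pR: "prec R a" using totD[OF r RD a(1)] ne by blast
    have ev: "eventually (\<lambda>n. Rs n \<in> {S\<in>D. prec S a}) sequentially"
      by (rule ev_open[OF lim ray_down_open[OF a(1)] _ RE]) (use RD pR in blast)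
    from eventually_conj[OF ev evq] obtain n where n: "prec (Rs n) a" "qq n \<le> Lq + d'"
      using eventually_happens'[OF trivial_limit_sequentially] by (metis (mono_tags, lifting) mem_Collect_eq)
    have "z \<in> box u" using zZ zu unfolding box_def zle_def by auto
    hence "Rs n z u" using n(1) au(1) uZ unfolding prec_def by blast
    hence "Rs n (zs n) u" using cl_trans[OF clRs] sp1 by blast
    thus False using dom[OF clRs n(2)] by blast
  qed
  have "L \<in> indirect_pref F R" using LZ RLz RzL unfolding indirect_pref_def indiff_def z_def by auto
  thus ?thesis using zsL unfolding zs_def by blast
qed

lemma main_general:
  assumes r: "rich_single_crossing D" and ED: "E \<subseteq> D" and mech: "mechanism E F" and sp: "strategy_proof E F"
  shows "V_continuous D E F"
  unfolding V_continuous_def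
proof (intro ballI allI impI)
  fix R Rs assume RE: "R \<in> E" and RsE: "\<forall>n. Rs n \<in> E" and m: "monotone_seq Rs"
    and lim: "limitin (subtopology (order_top D) E) Rs R sequentially"
  show "\<exists>L. ((\<lambda>n. F (Rs n)) \<longlongrightarrow> L) sequentially \<and> L \<in> indirect_pref F R"
    using m unfolding monotone_seq_def
  proof
    assume "\<forall>n. preceq (Rs n) (Rs (Suc n))"
    thus ?thesis using main_up[OF r ED mech sp RE RsE _ lim] by blast
  next
    assume "\<forall>n. preceq (Rs (Suc n)) (Rs n)"
    thus ?thesis using main_down[OF r ED mech sp RE RsE _ lim] by blast
  qed
qed

theorem mainTheorem6:
  fixes D :: "pref set"
  assumes "rich_single_crossing D"
  shows "(\<forall>F. mechanism D F \<longrightarrow> strategy_proof D F \<longrightarrow> V_continuous D D F) \<and>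
         (\<forall>Rlo\<in>D. \<forall>Rhi\<in>D. preceq Rlo Rhi \<longrightarrow>
            (\<forall>F. mechanism (interval D Rlo Rhi) F \<longrightarrow> strategy_proof (interval D Rlo Rhi) F \<longrightarrow>
                 V_continuous D (interval D Rlo Rhi) F))"
proof (intro conjI allI ballI impI)
  fix F assume "mechanism D F" "strategy_proof D F"
  thus "V_continuous D D F" using main_general[OF assms order.refl] by blast
next
  fix Rlo Rhi F assume "mechanism (interval D Rlo Rhi) F" "strategy_proof (interval D Rlo Rhi) F"
  moreover have "interval D Rlo Rhi \<subseteq> D" unfolding interval_def by blast
  ultimately show "V_continuous D (interval D Rlo Rhi) F" using main_general[OF assms] by blast
qed

end
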